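(* Let $n=k+d$, let $\Theta$ be an antisymmetric $n\times n$ real matrix, let $r=(r_1,\ldots,r_k,0_d)$ with $r_j>0$ for $j\le k$, and let $\alpha$ be the associated dynamics. Let $0<\beta<\infty$ and let $\varphi$ be a $\mathrm{KMS}_\beta$ state of $(\mathcal{T}_r(\mathbb{N}^n,\sigma_\Theta),\alpha)$. Then $\varphi$ restricts to a trace on the C*-subalgebra $C^*(L_x:x\in0_k\times\mathbb{N}^d)$ and \[ \varphi(L_pL_xL_y^*L_q^* )=\delta_{p,q}e^{-\beta\langle p,r\rangle}\varphi(L_xL_y^* ) \] for all $p,q\in\mathbb{N}^k\times0_d$ and $x,y\in0_k\times\mathbb{N}^d$.
   Context: $\sigma_\Theta(x,y)=e^{-\pi i\langle x,\Theta y\rangle}$; $L_p$ is the isometry on $\ell^2(\mathbb{N}^n)$ with $L_p\delta_q=\sigma_\Theta(p,q)\delta_{p+q}$ and $\mathcal{T}_r(\mathbb{N}^n,\sigma_\Theta)$ is the C*-algebra they generate. $\alpha_t(L_p)=e^{i\langle p,r\rangle t}L_p$. A state $\varphi$ is $\mathrm{KMS}_\beta$ if $\varphi(AB)=\varphi(B\alpha_{i\beta}(A))$ for all $\alpha$-analytic $A$ and all $B$. $0_k$ is the zero of $\mathbb{N}^k$; $\delta_{p,q}$ is the Kronecker delta. *)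

theory Defs
  imports "HOL-Analysis.Analysis"
begin

text \<open>Multi-indices in N^n are functions nat => nat vanishing
  from index n on; vectors of l^2(N^n) are complex functions on multi-indices,
  supported on N^n and square summable; bounded operators are maps on such
  functions, normalised to send everything outside l^2(N^n) to 0.\<close>

type_synonym idx = "nat \<Rightarrow> nat"
type_synonym vec = "idx \<Rightarrow> complex"
type_synonym op = "vec \<Rightarrow> vec"

definition Nn :: "nat \<Rightarrow> idx set" where
  "Nn n = {p. \<forall>i\<ge>n. p i = 0}"

definition l2 :: "nat \<Rightarrow> vec set" where
  "l2 n = {f. (\<forall>q. q \<notin> Nn n \<longrightarrow> f q = 0) \<and> (\<lambda>q. (cmod (f q))^2) summable_on UNIV}"

definition l2norm :: "vec \<Rightarrow> real" where
  "l2norm f = sqrt (infsum (\<lambda>q. (cmod (f q))^2) UNIV)"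

definition inner2 :: "vec \<Rightarrow> vec \<Rightarrow> complex" where
  "inner2 f g = infsum (\<lambda>q. cnj (f q) * g q) UNIV"

definition bop :: "nat \<Rightarrow> op \<Rightarrow> bool" where
  "bop n T \<longleftrightarrow> (\<forall>f\<in>l2 n. T f \<in> l2 n)
     \<and> (\<forall>f\<in>l2 n. \<forall>g\<in>l2 n. \<forall>c::complex. T (\<lambda>q. f q + c * g q) = (\<lambda>q. T f q + c * T g q))
     \<and> (\<exists>C. \<forall>f\<in>l2 n. l2norm (T f) \<le> C * l2norm f)
     \<and> (\<forall>f. f \<notin> l2 n \<longrightarrow> T f = (\<lambda>q. 0))"

definition opnorm :: "nat \<Rightarrow> op \<Rightarrow> real" where
  "opnorm n T = Sup {l2norm (T f) | f. f \<in> l2 n \<and> l2norm f \<le> 1}"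

definition op_add :: "op \<Rightarrow> op \<Rightarrow> op" where
  "op_add S T = (\<lambda>f q. S f q + T f q)"

definition op_scale :: "complex \<Rightarrow> op \<Rightarrow> op" where
  "op_scale c T = (\<lambda>f q. c * T f q)"

definition op_diff :: "op \<Rightarrow> op \<Rightarrow> op" where
  "op_diff S T = (\<lambda>f q. S f q - T f q)"

definition adj :: "nat \<Rightarrow> op \<Rightarrow> op" where
  "adj n T = (\<lambda>g. if g \<in> l2 n then (THE h. h \<in> l2 n \<and> (\<forall>f\<in>l2 n. inner2 (T f) g = inner2 f h))
                 else (\<lambda>q. 0))"

definition cstar_closed :: "nat \<Rightarrow> op set \<Rightarrow> bool" where
  "cstar_closed n A \<longleftrightarrow> A \<subseteq> {T. bop n T}
     \<and> (\<forall>S\<in>A. \<forall>T\<in>A. op_add S T \<in> A)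
     \<and> (\<forall>c. \<forall>T\<in>A. op_scale c T \<in> A)
     \<and> (\<forall>S\<in>A. \<forall>T\<in>A. S \<circ> T \<in> A)
     \<and> (\<forall>T\<in>A. adj n T \<in> A)
     \<and> (\<forall>X T. (\<forall>j. X j \<in> A) \<and> bop n T \<and> (\<lambda>j. opnorm n (op_diff (X j) T)) \<longlonglongrightarrow> 0 \<longrightarrow> T \<in> A)"

definition cstar_gen :: "nat \<Rightarrow> op set \<Rightarrow> op set" where
  "cstar_gen n G = \<Inter>{A. G \<subseteq> A \<and> cstar_closed n A}"

definition pair_Theta :: "nat \<Rightarrow> (nat \<Rightarrow> nat \<Rightarrow> real) \<Rightarrow> idx \<Rightarrow> idx \<Rightarrow> real" where
  "pair_Theta n \<Theta> x y = (\<Sum>i<n. \<Sum>j<n. real (x i) * \<Theta> i j * real (y j))"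

definition sigma :: "nat \<Rightarrow> (nat \<Rightarrow> nat \<Rightarrow> real) \<Rightarrow> idx \<Rightarrow> idx \<Rightarrow> complex" where
  "sigma n \<Theta> x y = exp (- (pi * \<i> * complex_of_real (pair_Theta n \<Theta> x y)))"

definition pair_r :: "nat \<Rightarrow> idx \<Rightarrow> (nat \<Rightarrow> real) \<Rightarrow> real" where
  "pair_r n p r = (\<Sum>i<n. real (p i) * r i)"

text \<open>The isometry L_p: L_p delta_q = sigma(p,q) delta_(p+q).\<close>
definition Lop :: "nat \<Rightarrow> (nat \<Rightarrow> nat \<Rightarrow> real) \<Rightarrow> idx \<Rightarrow> op" where
  "Lop n \<Theta> p = (\<lambda>f. if f \<in> l2 n then
      (\<lambda>m. if (\<forall>i. p i \<le> m i) then sigma n \<Theta> p (\<lambda>i. m i - p i) * f (\<lambda>i. m i - p i) else 0)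
    else (\<lambda>q. 0))"

definition Toeplitz :: "nat \<Rightarrow> (nat \<Rightarrow> nat \<Rightarrow> real) \<Rightarrow> op set" where
  "Toeplitz n \<Theta> = cstar_gen n {Lop n \<Theta> p | p. p \<in> Nn n}"

text \<open>The dynamics alpha_t(L_p) = e^(i<p,r>t) L_p, implemented spatially by the
  diagonal unitaries U_t delta_q = e^(i<q,r>t) delta_q, alpha_t(T) = U_t T U_t^*.\<close>
definition Ut :: "nat \<Rightarrow> (nat \<Rightarrow> real) \<Rightarrow> real \<Rightarrow> op" where
  "Ut n r t = (\<lambda>f. if f \<in> l2 n then (\<lambda>q. exp (\<i> * complex_of_real (t * pair_r n q r)) * f q)
                  else (\<lambda>q. 0))"

definition dyn :: "nat \<Rightarrow> (nat \<Rightarrow> real) \<Rightarrow> real \<Rightarrow> op \<Rightarrow> op" where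
  "dyn n r t T = Ut n r t \<circ> T \<circ> Ut n r (- t)"

definition is_state :: "nat \<Rightarrow> op set \<Rightarrow> (op \<Rightarrow> complex) \<Rightarrow> bool" where
  "is_state n A \<phi> \<longleftrightarrow>
     (\<forall>S\<in>A. \<forall>T\<in>A. \<forall>c. \<phi> (op_add S (op_scale c T)) = \<phi> S + c * \<phi> T)
     \<and> (\<forall>T\<in>A. Im (\<phi> (adj n T \<circ> T)) = 0 \<and> Re (\<phi> (adj n T \<circ> T)) \<ge> 0)
     \<and> \<phi> (\<lambda>f. if f \<in> l2 n then f else (\<lambda>q. 0)) = 1"

definition op_entire :: "nat \<Rightarrow> (complex \<Rightarrow> op) \<Rightarrow> bool" where
  "op_entire n F \<longleftrightarrow> (\<forall>z. \<exists>D. bop n D \<and>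
     ((\<lambda>h. opnorm n (\<lambda>f q. (F (z + h) f q - F z f q) / h - D f q)) \<longlongrightarrow> 0) (at 0))"

text \<open>F is an entire extension of t |-> alpha_t(A) with values in the algebra;
  A is alpha-analytic iff such an F exists, and then alpha_z(A) = F z.\<close>
definition analytic_ext :: "nat \<Rightarrow> (nat \<Rightarrow> real) \<Rightarrow> op set \<Rightarrow> op \<Rightarrow> (complex \<Rightarrow> op) \<Rightarrow> bool" where
  "analytic_ext n r Alg A F \<longleftrightarrow> A \<in> Alg \<and> (\<forall>z. F z \<in> Alg) \<and> op_entire n F
     \<and> (\<forall>t::real. F (complex_of_real t) = dyn n r t A)"

definition is_KMS :: "nat \<Rightarrow> (nat \<Rightarrow> real) \<Rightarrow> op set \<Rightarrow> real \<Rightarrow> (op \<Rightarrow> complex) \<Rightarrow> bool" where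
  "is_KMS n r Alg \<beta> \<phi> \<longleftrightarrow> is_state n Alg \<phi> \<and>
     (\<forall>A F B. analytic_ext n r Alg A F \<and> B \<in> Alg \<longrightarrow>
        \<phi> (A \<circ> B) = \<phi> (B \<circ> F (\<i> * complex_of_real \<beta>)))"

end

theory Submission
  imports Defs
begin

definition sqn :: "vec \<Rightarrow> idx \<Rightarrow> real" where "sqn f = (\<lambda>q. (cmod (f q))^2)"
definition NN :: "vec \<Rightarrow> real" where "NN f = infsum (sqn f) UNIV"
definition delta :: "idx \<Rightarrow> vec" where "delta m = (\<lambda>q. if q = m then 1 else 0)"

lemma l2_summ: "f \<in> l2 n \<Longrightarrow> sqn f summable_on UNIV"
  by (simp add: l2_def sqn_def)

lemma l2_supp: "f \<in> l2 n \<Longrightarrow> q \<notin> Nn n \<Longrightarrow> f q = 0"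
  by (simp add: l2_def)

lemma l2I: "(\<And>q. q \<notin> Nn n \<Longrightarrow> f q = 0) \<Longrightarrow> sqn f summable_on UNIV \<Longrightarrow> f \<in> l2 n"
  by (simp add: l2_def sqn_def)

lemma sqn_nonneg[simp]: "0 \<le> sqn f q" by (simp add: sqn_def)

lemma NN_nonneg: "0 \<le> NN f" unfolding NN_def by (rule infsum_nonneg) simp

lemma l2norm_NN: "l2norm f = sqrt (NN f)" by (simp add: l2norm_def NN_def sqn_def)

lemma l2norm_nonneg: "0 \<le> l2norm f" by (simp add: l2norm_NN NN_nonneg)

lemma l2norm_sq: "(l2norm f)^2 = NN f" by (simp add: l2norm_NN NN_nonneg)

lemma zero_l2[simp]: "(\<lambda>q. 0) \<in> l2 n" by (rule l2I) (auto simp: sqn_def)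

lemma NN_zero[simp]: "NN (\<lambda>q. 0) = 0" by (simp add: NN_def sqn_def)
lemma l2norm_zero[simp]: "l2norm (\<lambda>q. 0) = 0" by (simp add: l2norm_NN)

lemma NN_zeroD: assumes "sqn f summable_on UNIV" "NN f = 0" shows "f = (\<lambda>q. 0)"
proof
  fix q
  have "sqn f q = 0" using nonneg_infsum_le_0D[of "sqn f" UNIV q] assms by (simp add: NN_def)
  thus "f q = 0" by (simp add: sqn_def)
qed

lemma l2norm_zeroD: "sqn f summable_on UNIV \<Longrightarrow> l2norm f = 0 \<Longrightarrow> f = (\<lambda>q. 0)"
  using NN_zeroD NN_nonneg by (simp add: l2norm_NN)

lemma coord_le_NN: assumes "sqn f summable_on UNIV" shows "(cmod (f m))^2 \<le> NN f"
proof -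
  have "sum (sqn f) {m} \<le> infsum (sqn f) UNIV"
    by (rule finite_sum_le_infsum[OF assms]) auto
  thus ?thesis by (simp add: NN_def sqn_def)
qed

lemma coord_le_l2norm: assumes "sqn f summable_on UNIV" shows "cmod (f m) \<le> l2norm f"
  using coord_le_NN[OF assms, of m] by (simp add: l2norm_NN real_le_rsqrt)

lemma amgm: fixes x y t :: real assumes "t > 0" shows "2 * (x * y) \<le> t * x^2 + y^2 / t"
proof -
  have e: "t*x^2 + y^2/t - 2*(x*y) = (t*x-y)^2/t" using assms by (simp add: field_simps power2_eq_square)
  have "0 \<le> (t*x-y)^2/t" using assms by simp
  thus ?thesis using e by linarith
qed

lemma abs_prod_summable:
  assumes "sqn f summable_on UNIV" "sqn g summable_on UNIV"
  shows "(\<lambda>q. cmod (f q) * cmod (g q)) summable_on UNIV"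
proof (rule summable_on_comparison_test)
  show "(\<lambda>q. sqn f q + sqn g q) summable_on UNIV" using assms by (rule summable_on_add)
  fix q
  have "0 \<le> cmod (f q) * cmod (g q)" by simp
  moreover have "2 * (cmod (f q) * cmod (g q)) \<le> sqn f q + sqn g q"
    using amgm[of 1 "cmod (f q)" "cmod (g q)"] by (simp add: sqn_def)
  ultimately show "cmod (f q) * cmod (g q) \<le> sqn f q + sqn g q" by linarith
  show "0 \<le> cmod (f q) * cmod (g q)" by simp
qed

lemma cnj_prod_summable:
  assumes "sqn f summable_on UNIV" "sqn g summable_on UNIV"
  shows "(\<lambda>q. cnj (f q) * g q) summable_on UNIV"
  by (rule abs_summable_summable) (use abs_prod_summable[OF assms] in \<open>simp add: norm_mult\<close>)

lemma cs_real:
  assumes sf: "sqn f summable_on UNIV" and sg: "sqn g summable_on UNIV"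
  shows "infsum (\<lambda>q. cmod (f q) * cmod (g q)) UNIV \<le> l2norm f * l2norm g"
proof (cases "NN f = 0 \<or> NN g = 0")
  case True
  hence "f = (\<lambda>q. 0) \<or> g = (\<lambda>q. 0)" using NN_zeroD sf sg by blast
  thus ?thesis by (auto simp: l2norm_nonneg)
next
  case False
  define a where "a = l2norm f"
  define b where "b = l2norm g"
  have a: "a > 0" "a^2 = NN f" using False NN_nonneg[of f] l2norm_sq[of f] unfolding a_def l2norm_NN by auto
  have b: "b > 0" "b^2 = NN g" using False NN_nonneg[of g] l2norm_sq[of g] unfolding b_def l2norm_NN by auto
  define t where "t = b / a"
  have t: "t > 0" using a b by (simp add: t_def)
  have "2 * infsum (\<lambda>q. cmod (f q) * cmod (g q)) UNIV = infsum (\<lambda>q. 2 * (cmod (f q) * cmod (g q))) UNIV"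
    by (simp add: infsum_cmult_right')
  also have "\<dots> \<le> infsum (\<lambda>q. t * sqn f q + sqn g q / t) UNIV"
  proof (rule infsum_mono)
    show "(\<lambda>q. 2 * (cmod (f q) * cmod (g q))) summable_on UNIV"
      using abs_prod_summable[OF sf sg] by (rule summable_on_cmult_right)
    have "(\<lambda>q. sqn g q * inverse t) summable_on UNIV" using sg by (rule summable_on_cmult_left)
    moreover have "(\<lambda>q. t * sqn f q) summable_on UNIV" using sf by (rule summable_on_cmult_right)
    ultimately show "(\<lambda>q. t * sqn f q + sqn g q / t) summable_on UNIV"
      by (simp add: divide_inverse summable_on_add)
    fix q show "2 * (cmod (f q) * cmod (g q)) \<le> t * sqn f q + sqn g q / t"
      using amgm[OF t] by (simp add: sqn_def)
  qed
  also have "\<dots> = t * NN f + NN g / t"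
    using sf sg unfolding NN_def
    by (subst infsum_add) (auto simp: infsum_cmult_right' divide_inverse infsum_cmult_left' summable_on_cmult_right summable_on_cmult_left)
  also have "\<dots> = 2 * (a * b)" using a b unfolding t_def by (simp add: a(2)[symmetric] b(2)[symmetric] power2_eq_square field_simps)
  finally show ?thesis by (simp add: a_def b_def)
qed

lemma sqn_scale: "sqn (\<lambda>q. c * f q) = (\<lambda>q. (cmod c)^2 * sqn f q)"
  by (auto simp: sqn_def norm_mult power_mult_distrib)

lemma sqn_scale_summable: "sqn f summable_on UNIV \<Longrightarrow> sqn (\<lambda>q. c * f q) summable_on UNIV"
  unfolding sqn_scale by (rule summable_on_cmult_right)

lemma NN_scale: "NN (\<lambda>q. c * f q) = (cmod c)^2 * NN f"
  unfolding NN_def sqn_scale by (rule infsum_cmult_right')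

lemma l2norm_scale: "l2norm (\<lambda>q. c * f q) = cmod c * l2norm f"
  by (simp add: l2norm_NN NN_scale real_sqrt_mult)

lemma sqn_add_le: "sqn (\<lambda>q. f q + g q) q \<le> sqn f q + 2 * (cmod (f q) * cmod (g q)) + sqn g q"
proof -
  have "cmod (f q + g q) \<le> cmod (f q) + cmod (g q)" by (rule norm_triangle_ineq)
  hence "(cmod (f q + g q))^2 \<le> (cmod (f q) + cmod (g q))^2" by (rule power_mono) simp
  thus ?thesis by (simp add: sqn_def power2_eq_square algebra_simps)
qed

lemma sqn_add_summable:
  assumes sf: "sqn f summable_on UNIV" and sg: "sqn g summable_on UNIV"
  shows "sqn (\<lambda>q. f q + g q) summable_on UNIV"
proof (rule summable_on_comparison_test)
  show "(\<lambda>q. sqn f q + 2 * (cmod (f q) * cmod (g q)) + sqn g q) summable_on UNIV"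
    by (intro summable_on_add summable_on_cmult_right abs_prod_summable sf sg)
qed (auto intro: sqn_add_le)

lemma l2norm_triangle:
  assumes sf: "sqn f summable_on UNIV" and sg: "sqn g summable_on UNIV"
  shows "l2norm (\<lambda>q. f q + g q) \<le> l2norm f + l2norm g"
proof -
  have "NN (\<lambda>q. f q + g q) \<le> infsum (\<lambda>q. sqn f q + 2 * (cmod (f q) * cmod (g q)) + sqn g q) UNIV"
    unfolding NN_def
    by (intro infsum_mono sqn_add_summable sf sg summable_on_add summable_on_cmult_right abs_prod_summable sqn_add_le)
  also have "\<dots> = NN f + 2 * infsum (\<lambda>q. cmod (f q) * cmod (g q)) UNIV + NN g"
    unfolding NN_def
    by (intro infsumI has_sum_add has_sum_cmult_right has_sum_infsum abs_prod_summable sf sg)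
  also have "\<dots> \<le> NN f + 2 * (l2norm f * l2norm g) + NN g" using cs_real[OF sf sg] by simp
  also have "\<dots> = (l2norm f + l2norm g)^2" by (simp add: power2_eq_square algebra_simps l2norm_sq[symmetric])
  finally have "NN (\<lambda>q. f q + g q) \<le> (l2norm f + l2norm g)^2" .
  thus ?thesis unfolding l2norm_NN[of "\<lambda>q. f q + g q"]
    by (metis l2norm_nonneg add_nonneg_nonneg real_sqrt_le_iff real_sqrt_pow2_iff real_sqrt_unique power2_eq_square
        real_sqrt_le_mono real_sqrt_abs abs_of_nonneg)
qed

lemma l2_add: assumes "f \<in> l2 n" "g \<in> l2 n" shows "(\<lambda>q. f q + g q) \<in> l2 n"
  by (rule l2I[where n=n]) (use assms in \<open>auto simp: l2_supp intro!: sqn_add_summable l2_summ[OF assms(1)] l2_summ[OF assms(2)]\<close>)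

lemma l2_scale: assumes "f \<in> l2 n" shows "(\<lambda>q. c * f q) \<in> l2 n"
  by (rule l2I[where n=n]) (use assms in \<open>auto simp: l2_supp intro!: sqn_scale_summable l2_summ[OF assms(1)]\<close>)

lemma l2_lin: "f \<in> l2 n \<Longrightarrow> g \<in> l2 n \<Longrightarrow> (\<lambda>q. f q + c * g q) \<in> l2 n"
  using l2_add[OF _ l2_scale] by blast

lemma l2_diff: "f \<in> l2 n \<Longrightarrow> g \<in> l2 n \<Longrightarrow> (\<lambda>q. f q - g q) \<in> l2 n"
  using l2_lin[of f n g "-1"] by simp

lemma l2norm_diff_triangle:
  assumes sf: "sqn f summable_on UNIV" and sg: "sqn g summable_on UNIV"
  shows "l2norm (\<lambda>q. f q - g q) \<le> l2norm f + l2norm g"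
  using l2norm_triangle[OF sf sqn_scale_summable[OF sg, of "-1"]] l2norm_scale[of "-1" g] by simp

lemma inner2_sum: "sqn f summable_on UNIV \<Longrightarrow> sqn g summable_on UNIV \<Longrightarrow>
   ((\<lambda>q. cnj (f q) * g q) has_sum inner2 f g) UNIV"
  unfolding inner2_def by (rule has_sum_infsum, rule cnj_prod_summable)

lemma inner2_cs:
  assumes sf: "sqn f summable_on UNIV" and sg: "sqn g summable_on UNIV"
  shows "cmod (inner2 f g) \<le> l2norm f * l2norm g"
proof -
  have "cmod (inner2 f g) \<le> infsum (\<lambda>q. norm (cnj (f q) * g q)) UNIV"
    unfolding inner2_def
    by (rule norm_infsum_bound) (use abs_prod_summable[OF sf sg] in \<open>simp add: norm_mult\<close>)
  also have "\<dots> = infsum (\<lambda>q. cmod (f q) * cmod (g q)) UNIV" by (simp add: norm_mult)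
  also have "\<dots> \<le> l2norm f * l2norm g" by (rule cs_real[OF sf sg])
  finally show ?thesis .
qed

lemma inner2_lin_right:
  assumes sf: "sqn f summable_on UNIV" and sg: "sqn g summable_on UNIV" and sh: "sqn h summable_on UNIV"
  shows "inner2 f (\<lambda>q. g q + c * h q) = inner2 f g + c * inner2 f h"
proof -
  have "((\<lambda>q. cnj (f q) * g q + c * (cnj (f q) * h q)) has_sum (inner2 f g + c * inner2 f h)) UNIV"
    by (intro has_sum_add has_sum_cmult_right inner2_sum sf sg sh)
  thus ?thesis unfolding inner2_def by (intro infsumI) (simp add: algebra_simps)
qed

lemma inner2_lin_left:
  assumes sf: "sqn f summable_on UNIV" and sg: "sqn g summable_on UNIV" and sh: "sqn h summable_on UNIV"
  shows "inner2 (\<lambda>q. g q + c * h q) f = inner2 g f + cnj c * inner2 h f"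
proof -
  have "((\<lambda>q. cnj (g q) * f q + cnj c * (cnj (h q) * f q)) has_sum (inner2 g f + cnj c * inner2 h f)) UNIV"
    by (intro has_sum_add has_sum_cmult_right inner2_sum sf sg sh)
  thus ?thesis unfolding inner2_def by (intro infsumI) (simp add: algebra_simps)
qed

lemma inner2_zero_left[simp]: "inner2 (\<lambda>q. 0) g = 0" by (simp add: inner2_def)
lemma inner2_zero_right[simp]: "inner2 f (\<lambda>q. 0) = 0" by (simp add: inner2_def)

lemma inner2_self: assumes sf: "sqn f summable_on UNIV" shows "inner2 f f = complex_of_real (NN f)"
proof -
  have "inner2 f f = infsum (\<lambda>q. complex_of_real (sqn f q)) UNIV"
    unfolding inner2_def sqn_def
    by (rule infsum_cong) (metis complex_norm_square mult.commute of_real_power)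
  also have "\<dots> = complex_of_real (NN f)" unfolding NN_def
    by (intro infsumI has_sum_of_real has_sum_infsum sf)
  finally show ?thesis .
qed

lemma delta_l2: "m \<in> Nn n \<Longrightarrow> delta m \<in> l2 n"
  by (rule l2I) (auto simp: delta_def sqn_def intro!: finite_nonzero_values_imp_summable_on)

lemma delta_notl2: "m \<notin> Nn n \<Longrightarrow> delta m \<notin> l2 n"
  using l2_supp[of "delta m" n m] by (auto simp: delta_def)

lemma inner2_delta: "inner2 (delta m) h = h m"
proof -
  have "inner2 (delta m) h = infsum (\<lambda>q. cnj (delta m q) * h q) {m}"
    unfolding inner2_def by (rule infsum_cong_neutral) (auto simp: delta_def)
  thus ?thesis by (simp add: delta_def)
qed

lemma l2_eqI: assumes "f \<in> l2 n" "g \<in> l2 n" "\<And>m. m \<in> Nn n \<Longrightarrow> f m = g m" shows "f = g"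
proof
  fix m show "f m = g m" using assms l2_supp[of f n m] l2_supp[of g n m] by (cases "m \<in> Nn n") auto
qed

lemma bop_l2: "bop n T \<Longrightarrow> f \<in> l2 n \<Longrightarrow> T f \<in> l2 n" by (simp add: bop_def)
lemma bop_lin: "bop n T \<Longrightarrow> f \<in> l2 n \<Longrightarrow> g \<in> l2 n \<Longrightarrow> T (\<lambda>q. f q + c * g q) = (\<lambda>q. T f q + c * T g q)"
  by (simp add: bop_def)
lemma bop_out: "bop n T \<Longrightarrow> f \<notin> l2 n \<Longrightarrow> T f = (\<lambda>q. 0)" by (simp add: bop_def)
lemma bop_bound: assumes "bop n T" obtains C where "C \<ge> 0" "\<And>f. f \<in> l2 n \<Longrightarrow> l2norm (T f) \<le> C * l2norm f"
proof -
  obtain C where C: "\<forall>f\<in>l2 n. l2norm (T f) \<le> C * l2norm f" using assms by (auto simp: bop_def)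
  show ?thesis
  proof (rule that[of "max C 0"])
    fix f assume "f \<in> l2 n"
    hence "l2norm (T f) \<le> C * l2norm f" using C by blast
    also have "\<dots> \<le> max C 0 * l2norm f" by (rule mult_right_mono) (auto simp: l2norm_nonneg)
    finally show "l2norm (T f) \<le> max C 0 * l2norm f" .
  qed simp
qed

lemma bop_zero: assumes "bop n T" shows "T (\<lambda>q. 0) = (\<lambda>q. 0)"
proof -
  have "T (\<lambda>q. 0 + 1 * 0) = (\<lambda>q. T (\<lambda>q. 0) q + 1 * T (\<lambda>q. 0) q)" by (rule bop_lin[OF assms]) auto
  hence "T (\<lambda>q. 0) = (\<lambda>q. T (\<lambda>q. 0) q + T (\<lambda>q. 0) q)" by simp
  thus ?thesis by (metis add_cancel_right_right)
qed

lemma scale_l2_iff: "c \<noteq> 0 \<Longrightarrow> (\<lambda>q. c * g q) \<in> l2 n \<longleftrightarrow> g \<in> l2 n"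
proof
  assume "c \<noteq> 0" "(\<lambda>q. c * g q) \<in> l2 n"
  hence "(\<lambda>q. inverse c * (c * g q)) \<in> l2 n" using l2_scale[of "\<lambda>q. c * g q" n "inverse c"] by simp
  moreover have "(\<lambda>q. inverse c * (c * g q)) = g" using \<open>c \<noteq> 0\<close> by (simp add: mult.assoc[symmetric])
  ultimately show "g \<in> l2 n" by simp
qed (rule l2_scale)

lemma bop_scale: assumes "bop n T" shows "T (\<lambda>q. c * g q) = (\<lambda>q. c * T g q)"
proof (cases "g \<in> l2 n")
  case True
  have "T (\<lambda>q. 0 + c * g q) = (\<lambda>q. T (\<lambda>q. 0) q + c * T g q)" by (rule bop_lin[OF assms]) (auto simp: True)
  thus ?thesis by (simp add: bop_zero[OF assms])
next
  case False
  show ?thesis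
  proof (cases "c = 0")
    case True thus ?thesis by (simp add: bop_zero[OF assms])
  next
    case c: False
    thus ?thesis using False scale_l2_iff[OF c, of g n] bop_out[OF assms] by simp
  qed
qed

lemma bop_add: "bop n T \<Longrightarrow> f \<in> l2 n \<Longrightarrow> g \<in> l2 n \<Longrightarrow> T (\<lambda>q. f q + g q) = (\<lambda>q. T f q + T g q)"
  using bop_lin[of n T f g 1] by simp
lemma bop_diff: "bop n T \<Longrightarrow> f \<in> l2 n \<Longrightarrow> g \<in> l2 n \<Longrightarrow> T (\<lambda>q. f q - g q) = (\<lambda>q. T f q - T g q)"
  using bop_lin[of n T f g "-1"] by simp

lemma inner2_diff_left:
  assumes "f \<in> l2 n" "g \<in> l2 n" "h \<in> l2 n"
  shows "inner2 (\<lambda>q. g q - h q) f = inner2 g f - inner2 h f"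
  using inner2_lin_left[of f g h "-1"] assms by (simp add: l2_summ)

lemma bop_finite:
  assumes T: "bop n T" and F: "finite F" "F \<subseteq> Nn n" and g: "g \<in> l2 n"
  shows "(\<lambda>q. if q \<in> F then a q else 0) \<in> l2 n \<and>
         inner2 (T (\<lambda>q. if q \<in> F then a q else 0)) g = (\<Sum>m\<in>F. cnj (a m) * inner2 (T (delta m)) g)"
  using F
proof (induction F rule: finite_induct)
  case empty
  thus ?case by (simp add: bop_zero[OF T])
next
  case (insert x F)
  define w where "w = (\<lambda>q. if q \<in> F then a q else 0)"
  have w: "w \<in> l2 n" "inner2 (T w) g = (\<Sum>m\<in>F. cnj (a m) * inner2 (T (delta m)) g)"
    using insert w_def by auto
  have dx: "delta x \<in> l2 n" using insert by (auto intro: delta_l2)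
  have eq: "(\<lambda>q. if q \<in> insert x F then a q else 0) = (\<lambda>q. w q + a x * delta x q)"
    using insert by (auto simp: w_def delta_def)
  have "inner2 (T (\<lambda>q. w q + a x * delta x q)) g = inner2 (\<lambda>q. T w q + a x * T (delta x) q) g"
    by (simp add: bop_lin[OF T w(1) dx])
  also have "\<dots> = inner2 (T w) g + cnj (a x) * inner2 (T (delta x)) g"
    by (rule inner2_lin_left) (auto intro!: l2_summ bop_l2[OF T] w dx g)
  finally show ?case unfolding eq using w dx insert by (auto intro: l2_lin simp: algebra_simps)
qed

lemma sqrt_bound_aux: fixes S K :: real assumes "0 \<le> S" "0 \<le> K" "S \<le> K * sqrt S" shows "S \<le> K^2"
proof (cases "S = 0")
  case True thus ?thesis by simp
next
  case False
  hence p: "sqrt S > 0" using assms by simp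
  have "sqrt S * sqrt S \<le> K * sqrt S" using assms by simp
  hence "sqrt S \<le> K" using mult_right_le_imp_le p by blast
  hence "(sqrt S)^2 \<le> K^2" by (rule power_mono) (use assms in simp)
  thus ?thesis using assms by simp
qed

lemma NN_finite_restrict:
  assumes "finite G"
  shows "(sqn (\<lambda>q. if q \<in> G then a q else 0) has_sum sum (sqn a) G) UNIV"
proof -
  have "(sqn a has_sum sum (sqn a) G) G" by (rule has_sum_finite[OF assms])
  thus ?thesis by (subst has_sum_cong_neutral[where T=G]) (auto simp: sqn_def)
qed

lemma riesz:
  assumes T: "bop n T" and g: "g \<in> l2 n"
  shows "\<exists>h\<in>l2 n. \<forall>f\<in>l2 n. inner2 (T f) g = inner2 f h"
proof -
  obtain C where C: "C \<ge> 0" "\<And>f. f \<in> l2 n \<Longrightarrow> l2norm (T f) \<le> C * l2norm f" using bop_bound[OF T] by blast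
  define h where "h m = inner2 (T (delta m)) g" for m
  have h0: "h m = 0" if "m \<notin> Nn n" for m
    using that delta_notl2 bop_out[OF T] by (simp add: h_def)
  have fin: "inner2 (T (\<lambda>q. if q \<in> G then a q else 0)) g = (\<Sum>m\<in>G. cnj (a m) * h m)"
       "(\<lambda>q. if q \<in> G then a q else 0) \<in> l2 n"
    if "finite G" "G \<subseteq> Nn n" for G a
    using bop_finite[OF T that g, of a] by (auto simp: h_def)
  have hsum: "sqn h summable_on UNIV"
  proof (rule nonneg_bdd_above_summable_on)
    show "bdd_above (sum (sqn h) ` {F. F \<subseteq> UNIV \<and> finite F})"
    proof (rule bdd_aboveI2)
      fix F :: "idx set" assume "F \<in> {F. F \<subseteq> UNIV \<and> finite F}"
      hence F: "finite F" by simp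
      define G where "G = F \<inter> Nn n"
      have G: "finite G" "G \<subseteq> Nn n" using F by (auto simp: G_def)
      have sFG: "sum (sqn h) F = sum (sqn h) G"
        by (rule sum.mono_neutral_right) (auto simp: G_def F sqn_def h0)
      define w where "w = (\<lambda>q. if q \<in> G then h q else 0)"
      have w: "w \<in> l2 n" using fin(2)[OF G] by (simp add: w_def)
      have "inner2 (T w) g = (\<Sum>m\<in>G. cnj (h m) * h m)" using fin(1)[OF G] by (simp add: w_def)
      also have "\<dots> = complex_of_real (sum (sqn h) G)"
        unfolding sqn_def of_real_sum by (intro sum.cong refl) (metis complex_norm_square mult.commute of_real_power)
      finally have e1: "inner2 (T w) g = complex_of_real (sum (sqn h) G)" .
      have e2: "NN w = sum (sqn h) G" unfolding NN_def w_def using NN_finite_restrict[OF G(1)] by (rule infsumI)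
      have "sum (sqn h) G = cmod (inner2 (T w) g)" by (simp only: e1 norm_of_real) (simp add: sum_nonneg)
      also have "\<dots> \<le> l2norm (T w) * l2norm g" by (rule inner2_cs) (auto intro!: l2_summ bop_l2[OF T] w g)
      also have "\<dots> \<le> C * l2norm w * l2norm g" by (rule mult_right_mono) (auto intro: C w simp: l2norm_nonneg)
      also have "\<dots> = (C * l2norm g) * sqrt (sum (sqn h) G)" by (simp add: l2norm_NN e2)
      finally have "sum (sqn h) G \<le> (C * l2norm g)^2"
        by (intro sqrt_bound_aux) (auto simp: sum_nonneg C l2norm_nonneg)
      thus "sum (sqn h) F \<le> (C * l2norm g)^2" using sFG by simp
    qed
  qed simp
  have hl2: "h \<in> l2 n" by (rule l2I[OF h0 hsum])
  have main: "inner2 (T f) g = inner2 f h" if f: "f \<in> l2 n" for f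
  proof -
    let ?s = "\<lambda>F. \<Sum>q\<in>F. cnj (f q) * h q"
    have lim1: "(?s \<longlongrightarrow> inner2 f h) (finite_subsets_at_top UNIV)"
      using inner2_sum[OF l2_summ[OF f] hsum] by (simp add: has_sum_def)
    have sf: "(sum (sqn f) \<longlongrightarrow> NN f) (finite_subsets_at_top UNIV)"
      using has_sum_infsum[OF l2_summ[OF f]] by (simp add: has_sum_def NN_def)
    have lim0: "((\<lambda>F. C * l2norm g * sqrt (NN f - sum (sqn f) F)) \<longlongrightarrow> C * l2norm g * sqrt (NN f - NN f)) (finite_subsets_at_top UNIV)"
      by (intro tendsto_intros sf)
    have ev: "\<forall>\<^sub>F F in finite_subsets_at_top UNIV. norm (?s F - inner2 (T f) g) \<le> C * l2norm g * sqrt (NN f - sum (sqn f) F)"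
    proof (rule eventually_finite_subsets_at_top_weakI)
      fix F :: "idx set" assume F: "finite F" "F \<subseteq> UNIV"
      define G where "G = F \<inter> Nn n"
      have G: "finite G" "G \<subseteq> Nn n" using F by (auto simp: G_def)
      define w where "w = (\<lambda>q. if q \<in> G then f q else 0)"
      have w: "w \<in> l2 n" using fin(2)[OF G] by (simp add: w_def)
      have sFG: "?s F = (\<Sum>q\<in>G. cnj (f q) * h q)"
        by (rule sum.mono_neutral_right) (auto simp: G_def F h0)
      have sqFG: "sum (sqn f) F = sum (sqn f) G"
        by (rule sum.mono_neutral_right) (auto simp: G_def F sqn_def l2_supp[OF f])
      have e1: "?s F = inner2 (T w) g" using sFG fin(1)[OF G] by (simp add: w_def)
      define d where "d = (\<lambda>q. f q - w q)"
      have d: "d \<in> l2 n" unfolding d_def by (rule l2_diff[OF f w])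
      have "((\<lambda>q. sqn f q + - (sqn w q)) has_sum (NN f + - sum (sqn f) G)) UNIV"
        apply (intro has_sum_add has_sum_uminusI)
        using has_sum_infsum[OF l2_summ[OF f]] apply (simp add: NN_def)
        using NN_finite_restrict[OF G(1), of f] by (simp add: w_def)
      moreover have "(\<lambda>q. sqn f q + - (sqn w q)) = sqn d" by (auto simp: sqn_def d_def w_def)
      ultimately have NNd: "NN d = NN f - sum (sqn f) F" using sqFG by (simp add: NN_def infsumI)
      have "?s F - inner2 (T f) g = inner2 (T w) g - inner2 (T f) g" using e1 by simp
      also have "\<dots> = - inner2 (\<lambda>q. T f q - T w q) g"
        by (subst inner2_diff_left) (auto intro: bop_l2[OF T] f w g)
      also have "\<dots> = - inner2 (T d) g" by (simp add: d_def bop_diff[OF T f w])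
      finally have "norm (?s F - inner2 (T f) g) = cmod (inner2 (T d) g)" by simp
      also have "\<dots> \<le> l2norm (T d) * l2norm g" by (rule inner2_cs) (auto intro!: l2_summ bop_l2[OF T] d g)
      also have "\<dots> \<le> C * l2norm d * l2norm g" by (rule mult_right_mono) (auto intro: C d simp: l2norm_nonneg)
      also have "\<dots> = C * l2norm g * sqrt (NN f - sum (sqn f) F)" by (simp add: l2norm_NN NNd)
      finally show "norm (?s F - inner2 (T f) g) \<le> C * l2norm g * sqrt (NN f - sum (sqn f) F)" .
    qed
    have "((\<lambda>F. ?s F - inner2 (T f) g) \<longlongrightarrow> 0) (finite_subsets_at_top UNIV)"
      by (rule Lim_null_comparison[OF ev]) (use lim0 in simp)
    hence lim2: "(?s \<longlongrightarrow> inner2 (T f) g) (finite_subsets_at_top UNIV)" by (rule LIM_zero_cancel)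
    show ?thesis using tendsto_unique[OF finite_subsets_at_top_neq_bot lim2 lim1] .
  qed
  show ?thesis using hl2 main by blast
qed

lemma inner2_cnj: "inner2 g f = cnj (inner2 f g)"
proof -
  have "cnj (inner2 f g) = infsum (\<lambda>q. cnj (cnj (f q) * g q)) UNIV" unfolding inner2_def by (rule infsum_cnj[symmetric])
  also have "\<dots> = inner2 g f" unfolding inner2_def by (rule infsum_cong) simp
  finally show ?thesis by simp
qed

lemma l2_unique_inner:
  assumes "h1 \<in> l2 n" "h2 \<in> l2 n" "\<And>f. f \<in> l2 n \<Longrightarrow> inner2 f h1 = inner2 f h2"
  shows "h1 = h2"
  by (rule l2_eqI[OF assms(1,2)]) (use assms(3)[OF delta_l2] in \<open>simp add: inner2_delta\<close>)

lemma adj_eqI: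
  assumes g: "g \<in> l2 n" and h: "h \<in> l2 n" and P: "\<And>f. f \<in> l2 n \<Longrightarrow> inner2 (T f) g = inner2 f h"
  shows "adj n T g = h"
proof -
  have "(THE h. h \<in> l2 n \<and> (\<forall>f\<in>l2 n. inner2 (T f) g = inner2 f h)) = h"
  proof (rule the_equality)
    show "h \<in> l2 n \<and> (\<forall>f\<in>l2 n. inner2 (T f) g = inner2 f h)" using h P by blast
    fix h' assume H: "h' \<in> l2 n \<and> (\<forall>f\<in>l2 n. inner2 (T f) g = inner2 f h')"
    show "h' = h"
    proof (rule l2_unique_inner[of h' n h])
      show "h' \<in> l2 n" using H by blast
      show "h \<in> l2 n" by (rule h)
      fix f assume f: "f \<in> l2 n"
      have "inner2 (T f) g = inner2 f h'" using H f by blast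
      thus "inner2 f h' = inner2 f h" using P[OF f] by simp
    qed
  qed
  thus ?thesis using g by (simp add: adj_def)
qed

lemma adj_out: "g \<notin> l2 n \<Longrightarrow> adj n T g = (\<lambda>q. 0)" by (simp add: adj_def)

lemma adj_prop:
  assumes T: "bop n T" and g: "g \<in> l2 n"
  shows "adj n T g \<in> l2 n" "\<And>f. f \<in> l2 n \<Longrightarrow> inner2 (T f) g = inner2 f (adj n T g)"
proof -
  obtain h where h: "h \<in> l2 n" "\<And>f. f \<in> l2 n \<Longrightarrow> inner2 (T f) g = inner2 f h" using riesz[OF T g] by blast
  have e: "adj n T g = h" by (rule adj_eqI[OF g h])
  show "adj n T g \<in> l2 n" using e h by simp
  fix f assume "f \<in> l2 n" thus "inner2 (T f) g = inner2 f (adj n T g)" using e h by simp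
qed

lemma bop_adj:
  assumes T: "bop n T"
  shows "bop n (adj n T)"
proof -
  obtain C where C: "C \<ge> 0" "\<And>f. f \<in> l2 n \<Longrightarrow> l2norm (T f) \<le> C * l2norm f" using bop_bound[OF T] by blast
  have l: "adj n T g \<in> l2 n" if "g \<in> l2 n" for g using adj_prop[OF T that] by simp
  have lin: "adj n T (\<lambda>q. f q + c * g q) = (\<lambda>q. adj n T f q + c * adj n T g q)"
    if f: "f \<in> l2 n" and g: "g \<in> l2 n" for f g c
  proof (rule adj_eqI)
    show "(\<lambda>q. f q + c * g q) \<in> l2 n" by (rule l2_lin[OF f g])
    show "(\<lambda>q. adj n T f q + c * adj n T g q) \<in> l2 n" by (rule l2_lin[OF l[OF f] l[OF g]])
    fix u assume u: "u \<in> l2 n"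
    have "inner2 (T u) (\<lambda>q. f q + c * g q) = inner2 (T u) f + c * inner2 (T u) g"
      by (rule inner2_lin_right) (auto intro!: l2_summ bop_l2[OF T] u f g)
    also have "\<dots> = inner2 u (adj n T f) + c * inner2 u (adj n T g)"
      using adj_prop(2)[OF T f u] adj_prop(2)[OF T g u] by simp
    also have "\<dots> = inner2 u (\<lambda>q. adj n T f q + c * adj n T g q)"
      by (rule inner2_lin_right[symmetric]) (auto intro!: l2_summ u l f g)
    finally show "inner2 (T u) (\<lambda>q. f q + c * g q) = inner2 u (\<lambda>q. adj n T f q + c * adj n T g q)" .
  qed
  have bd: "l2norm (adj n T g) \<le> C * l2norm g" if g: "g \<in> l2 n" for g
  proof -
    define h where "h = adj n T g"
    have h: "h \<in> l2 n" using l[OF g] by (simp add: h_def)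
    have "complex_of_real (NN h) = inner2 h h" by (rule inner2_self[symmetric, OF l2_summ[OF h]])
    also have "\<dots> = inner2 (T h) g" using adj_prop(2)[OF T g h] by (simp add: h_def)
    finally have "NN h = cmod (inner2 (T h) g)" using NN_nonneg[of h] by (metis norm_of_real abs_of_nonneg)
    also have "\<dots> \<le> l2norm (T h) * l2norm g" by (rule inner2_cs) (auto intro!: l2_summ bop_l2[OF T] h g)
    also have "\<dots> \<le> C * l2norm h * l2norm g" by (rule mult_right_mono) (auto intro: C h simp: l2norm_nonneg)
    finally have "(l2norm h)^2 \<le> (C * l2norm g) * l2norm h" by (simp add: l2norm_sq algebra_simps)
    hence "l2norm h * l2norm h \<le> (C * l2norm g) * l2norm h" by (simp add: power2_eq_square)
    hence "l2norm h \<le> C * l2norm g"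
      using C(1) l2norm_nonneg[of h] l2norm_nonneg[of g] mult_right_le_imp_le[of "l2norm h" "l2norm h" "C * l2norm g"]
      by (cases "l2norm h = 0") auto
    thus ?thesis by (simp add: h_def)
  qed
  show ?thesis unfolding bop_def using l lin bd adj_out by blast
qed

lemma bopI:
  assumes "\<And>f. f \<in> l2 n \<Longrightarrow> T f \<in> l2 n"
    and "\<And>f g c. f \<in> l2 n \<Longrightarrow> g \<in> l2 n \<Longrightarrow> T (\<lambda>q. f q + c * g q) = (\<lambda>q. T f q + c * T g q)"
    and "\<And>f. f \<in> l2 n \<Longrightarrow> l2norm (T f) \<le> C * l2norm f"
    and "\<And>f. f \<notin> l2 n \<Longrightarrow> T f = (\<lambda>q. 0)"
  shows "bop n T"
  unfolding bop_def using assms by blast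

lemma bop_comp: assumes S: "bop n S" and T: "bop n T" shows "bop n (S \<circ> T)"
proof -
  obtain C1 where C1: "C1 \<ge> 0" "\<And>f. f \<in> l2 n \<Longrightarrow> l2norm (S f) \<le> C1 * l2norm f" using bop_bound[OF S] by blast
  obtain C2 where C2: "C2 \<ge> 0" "\<And>f. f \<in> l2 n \<Longrightarrow> l2norm (T f) \<le> C2 * l2norm f" using bop_bound[OF T] by blast
  have bd: "l2norm (S (T f)) \<le> (C1 * C2) * l2norm f" if f: "f \<in> l2 n" for f
  proof -
    have "l2norm (S (T f)) \<le> C1 * l2norm (T f)" by (rule C1(2)[OF bop_l2[OF T f]])
    also have "\<dots> \<le> C1 * (C2 * l2norm f)" by (rule mult_left_mono[OF C2(2)[OF f] C1(1)])
    finally show ?thesis by (simp add: mult.assoc)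
  qed
  show ?thesis
  proof (rule bopI[where C="C1*C2"])
    fix f assume "f \<in> l2 n" thus "(S \<circ> T) f \<in> l2 n" by (simp add: bop_l2[OF S] bop_l2[OF T])
  next
    fix f assume "f \<in> l2 n" thus "l2norm ((S \<circ> T) f) \<le> C1 * C2 * l2norm f" using bd by simp
  next
    fix f g c assume "f \<in> l2 n" "g \<in> l2 n"
    thus "(S \<circ> T) (\<lambda>q. f q + c * g q) = (\<lambda>q. (S \<circ> T) f q + c * (S \<circ> T) g q)"
      by (simp add: bop_lin[OF T] bop_lin[OF S] bop_l2[OF T])
  next
    fix f assume "f \<notin> l2 n" thus "(S \<circ> T) f = (\<lambda>q. 0)" by (simp add: bop_out[OF T] bop_zero[OF S])
  qed
qed

lemma bop_op_add: assumes S: "bop n S" and T: "bop n T" shows "bop n (op_add S T)"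
proof -
  obtain C1 where C1: "C1 \<ge> 0" "\<And>f. f \<in> l2 n \<Longrightarrow> l2norm (S f) \<le> C1 * l2norm f" using bop_bound[OF S] by blast
  obtain C2 where C2: "C2 \<ge> 0" "\<And>f. f \<in> l2 n \<Longrightarrow> l2norm (T f) \<le> C2 * l2norm f" using bop_bound[OF T] by blast
  have "l2norm (op_add S T f) \<le> (C1 + C2) * l2norm f" if f: "f \<in> l2 n" for f
  proof -
    have "l2norm (op_add S T f) \<le> l2norm (S f) + l2norm (T f)" unfolding op_add_def
      by (rule l2norm_triangle) (auto intro: l2_summ bop_l2 S T f)
    also have "\<dots> \<le> C1 * l2norm f + C2 * l2norm f" using C1(2)[OF f] C2(2)[OF f] by simp
    finally show ?thesis by (simp add: algebra_simps)
  qed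
  moreover have "op_add S T (\<lambda>q. f q + c * g q) = (\<lambda>q. op_add S T f q + c * op_add S T g q)"
    if "f \<in> l2 n" "g \<in> l2 n" for f g c
    using that by (auto simp: op_add_def bop_lin[OF S] bop_lin[OF T] algebra_simps)
  moreover have "op_add S T f \<in> l2 n" if "f \<in> l2 n" for f
    unfolding op_add_def by (rule l2_add) (auto intro: bop_l2 S T that)
  ultimately show ?thesis by (intro bopI) (auto simp: op_add_def bop_out[OF S] bop_out[OF T])
qed

lemma bop_op_scale: assumes T: "bop n T" shows "bop n (op_scale c T)"
proof -
  obtain C2 where C2: "C2 \<ge> 0" "\<And>f. f \<in> l2 n \<Longrightarrow> l2norm (T f) \<le> C2 * l2norm f" using bop_bound[OF T] by blast
  have "l2norm (op_scale c T f) \<le> (cmod c * C2) * l2norm f" if f: "f \<in> l2 n" for f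
    unfolding op_scale_def l2norm_scale using C2(2)[OF f] by (simp add: mult.assoc mult_left_mono)
  moreover have "op_scale c T (\<lambda>q. f q + d * g q) = (\<lambda>q. op_scale c T f q + d * op_scale c T g q)"
    if "f \<in> l2 n" "g \<in> l2 n" for f g d
    using that by (auto simp: op_scale_def bop_lin[OF T] algebra_simps)
  moreover have "op_scale c T f \<in> l2 n" if "f \<in> l2 n" for f
    unfolding op_scale_def by (rule l2_scale) (auto intro: bop_l2 T that)
  ultimately show ?thesis by (intro bopI) (auto simp: op_scale_def bop_out[OF T])
qed

lemma op_diff_eq: "op_diff S T = op_add S (op_scale (-1) T)"
  by (auto simp: op_diff_def op_add_def op_scale_def)

lemma bop_op_diff: "bop n S \<Longrightarrow> bop n T \<Longrightarrow> bop n (op_diff S T)"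
  unfolding op_diff_eq by (intro bop_op_add bop_op_scale)

lemma opnorm_upper:
  assumes T: "bop n T" and f: "f \<in> l2 n" "l2norm f \<le> 1"
  shows "l2norm (T f) \<le> opnorm n T"
proof -
  obtain C where C: "C \<ge> 0" "\<And>f. f \<in> l2 n \<Longrightarrow> l2norm (T f) \<le> C * l2norm f" using bop_bound[OF T] by blast
  have "bdd_above {l2norm (T f) | f. f \<in> l2 n \<and> l2norm f \<le> 1}"
  proof (rule bdd_aboveI)
    fix x assume "x \<in> {l2norm (T f) | f. f \<in> l2 n \<and> l2norm f \<le> 1}"
    then obtain g where g: "x = l2norm (T g)" "g \<in> l2 n" "l2norm g \<le> 1" by blast
    have "x \<le> C * l2norm g" using C(2)[OF g(2)] g(1) by simp
    also have "\<dots> \<le> C * 1" by (rule mult_left_mono[OF g(3) C(1)])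
    finally show "x \<le> C" by simp
  qed
  moreover have "l2norm (T f) \<in> {l2norm (T f) | f. f \<in> l2 n \<and> l2norm f \<le> 1}" using f by blast
  ultimately show ?thesis unfolding opnorm_def by (intro cSup_upper)
qed

lemma opnorm_nonneg: assumes T: "bop n T" shows "0 \<le> opnorm n T"
  using opnorm_upper[OF T zero_l2] bop_zero[OF T] by simp

lemma opnorm_least:
  assumes "\<And>f. f \<in> l2 n \<Longrightarrow> l2norm f \<le> 1 \<Longrightarrow> l2norm (T f) \<le> B"
  shows "opnorm n T \<le> B"
  unfolding opnorm_def
  by (rule cSup_least) (use assms in \<open>auto intro!: exI[of _ "\<lambda>q. 0"]\<close>)

lemma opnorm_apply:
  assumes T: "bop n T" and f: "f \<in> l2 n"
  shows "l2norm (T f) \<le> opnorm n T * l2norm f"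
proof (cases "l2norm f = 0")
  case True
  hence "f = (\<lambda>q. 0)" using l2norm_zeroD l2_summ[OF f] by blast
  thus ?thesis by (simp add: bop_zero[OF T])
next
  case False
  hence pos: "l2norm f > 0" using l2norm_nonneg[of f] by simp
  define c where "c = complex_of_real (inverse (l2norm f))"
  have g: "(\<lambda>q. c * f q) \<in> l2 n" by (rule l2_scale[OF f])
  have cm: "cmod c = inverse (l2norm f)" unfolding c_def norm_of_real using pos by simp
  have "l2norm (\<lambda>q. c * f q) = 1" using pos by (simp add: l2norm_scale cm)
  hence "l2norm (T (\<lambda>q. c * f q)) \<le> opnorm n T" using opnorm_upper[OF T g] by simp
  hence "inverse (l2norm f) * l2norm (T f) \<le> opnorm n T"
    using pos by (simp add: bop_scale[OF T] l2norm_scale cm)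
  thus ?thesis using pos by (simp add: field_simps)
qed

lemma opnorm_scale_le:
  assumes T: "bop n T"
  shows "opnorm n (\<lambda>f q. s * T f q) \<le> cmod s * opnorm n T"
proof (rule opnorm_least)
  fix f assume f: "f \<in> l2 n" "l2norm f \<le> 1"
  have "l2norm (\<lambda>q. s * T f q) = cmod s * l2norm (T f)" by (rule l2norm_scale)
  also have "\<dots> \<le> cmod s * opnorm n T" by (rule mult_left_mono[OF opnorm_upper[OF T f]]) simp
  finally show "l2norm (\<lambda>q. s * T f q) \<le> cmod s * opnorm n T" .
qed

lemma cstar_gen_sub: "G \<subseteq> cstar_gen n G" unfolding cstar_gen_def by blast
lemma cstar_gen_least: "cstar_closed n A \<Longrightarrow> G \<subseteq> A \<Longrightarrow> cstar_gen n G \<subseteq> A"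
  unfolding cstar_gen_def by blast
lemma cstar_gen_mono: "G \<subseteq> H \<Longrightarrow> cstar_gen n G \<subseteq> cstar_gen n H"
  unfolding cstar_gen_def by blast
lemma cstar_gen_closedD:
  assumes "\<And>A. cstar_closed n A \<Longrightarrow> S \<in> A \<Longrightarrow> T \<in> A \<Longrightarrow> P A"
    and "S \<in> cstar_gen n G" "T \<in> cstar_gen n G"
    and "\<And>A. P A \<Longrightarrow> X \<in> A"
  shows "X \<in> cstar_gen n G"
proof -
  have "X \<in> A" if "A \<in> {A. G \<subseteq> A \<and> cstar_closed n A}" for A
  proof -
    have "S \<in> A" "T \<in> A" "cstar_closed n A" using that assms(2,3) unfolding cstar_gen_def by auto
    thus ?thesis using assms(1,4) by blast
  qed
  thus ?thesis unfolding cstar_gen_def by blast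
qed
lemma cstar_gen_comp: "S \<in> cstar_gen n G \<Longrightarrow> T \<in> cstar_gen n G \<Longrightarrow> S \<circ> T \<in> cstar_gen n G"
  by (rule cstar_gen_closedD[where P="\<lambda>A. S \<circ> T \<in> A" and S=S and T=T]) (auto simp: cstar_closed_def)
lemma cstar_gen_add: "S \<in> cstar_gen n G \<Longrightarrow> T \<in> cstar_gen n G \<Longrightarrow> op_add S T \<in> cstar_gen n G"
  by (rule cstar_gen_closedD[where P="\<lambda>A. op_add S T \<in> A" and S=S and T=T]) (auto simp: cstar_closed_def)
lemma cstar_gen_scale: "T \<in> cstar_gen n G \<Longrightarrow> op_scale c T \<in> cstar_gen n G"
  by (rule cstar_gen_closedD[where P="\<lambda>A. op_scale c T \<in> A" and S=T and T=T]) (auto simp: cstar_closed_def)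
lemma cstar_gen_adj: "T \<in> cstar_gen n G \<Longrightarrow> adj n T \<in> cstar_gen n G"
  by (rule cstar_gen_closedD[where P="\<lambda>A. adj n T \<in> A" and S=T and T=T]) (auto simp: cstar_closed_def)

definition ee :: "nat \<Rightarrow> (nat \<Rightarrow> real) \<Rightarrow> real \<Rightarrow> idx \<Rightarrow> complex" where
  "ee n r t q = exp (\<i> * complex_of_real (t * pair_r n q r))"

lemma ee_norm[simp]: "cmod (ee n r t q) = 1" by (simp add: ee_def)
lemma ee_inv[simp]: "ee n r t q * ee n r (-t) q = 1"
  by (simp add: ee_def exp_add[symmetric] algebra_simps)
lemma ee_inv'[simp]: "ee n r (-t) q * ee n r t q = 1"
  by (simp add: ee_def exp_add[symmetric] algebra_simps)
lemma ee_cnj: "cnj (ee n r t q) = ee n r (-t) q"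
  by (simp add: ee_def exp_cnj)

lemma Ut_in: "f \<in> l2 n \<Longrightarrow> Ut n r t f = (\<lambda>q. ee n r t q * f q)"
  by (simp add: Ut_def ee_def)
lemma Ut_out: "f \<notin> l2 n \<Longrightarrow> Ut n r t f = (\<lambda>q. 0)"
  by (simp add: Ut_def)

lemma sqn_ee: "sqn (\<lambda>q. ee n r t q * f q) = sqn f"
  by (simp add: sqn_def norm_mult)

lemma Ut_l2: assumes f: "f \<in> l2 n" shows "Ut n r t f \<in> l2 n"
  unfolding Ut_in[OF f] by (rule l2I[where n=n]) (auto simp: sqn_ee l2_summ[OF f] l2_supp[OF f])

lemma Ut_l2norm: "f \<in> l2 n \<Longrightarrow> l2norm (Ut n r t f) = l2norm f"
  by (simp add: Ut_in l2norm_NN NN_def sqn_ee)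

lemma Ut_inv: assumes f: "f \<in> l2 n" shows "Ut n r t (Ut n r (-t) f) = f"
proof -
  have "Ut n r (-t) f \<in> l2 n" by (rule Ut_l2[OF f])
  thus ?thesis by (simp only: Ut_in[OF f] Ut_in) (simp add: Ut_in[OF f] mult.assoc[symmetric])
qed
lemma Ut_inv': "f \<in> l2 n \<Longrightarrow> Ut n r (-t) (Ut n r t f) = f"
  using Ut_inv[of f n r "-t"] by simp

lemma Ut_zero[simp]: "Ut n r t (\<lambda>q. 0) = (\<lambda>q. 0)" by (simp add: Ut_in)

lemma Ut_lin: "f \<in> l2 n \<Longrightarrow> g \<in> l2 n \<Longrightarrow> Ut n r t (\<lambda>q. f q + c * g q) = (\<lambda>q. Ut n r t f q + c * Ut n r t g q)"
  by (simp add: Ut_in l2_lin algebra_simps)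

lemma bop_Ut: "bop n (Ut n r t)"
  by (rule bopI[where C=1]) (auto simp: Ut_l2 Ut_lin Ut_l2norm Ut_out)

lemma inner2_Ut: assumes "u \<in> l2 n" "g \<in> l2 n"
  shows "inner2 u (Ut n r s g) = inner2 (Ut n r (-s) u) g"
  using assms by (simp add: Ut_in Ut_l2 inner2_def ee_cnj mult.assoc mult.left_commute)

definition comm :: "nat \<Rightarrow> (nat \<Rightarrow> real) \<Rightarrow> op \<Rightarrow> bool" where
  "comm n r T \<longleftrightarrow> (\<forall>t. \<forall>f\<in>l2 n. Ut n r t (T f) = T (Ut n r t f))"

lemma comm_dyn: assumes T: "bop n T" and c: "comm n r T" shows "dyn n r t T = T"
proof
  fix f show "dyn n r t T f = T f"
  proof (cases "f \<in> l2 n")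
    case True
    have "dyn n r t T f = Ut n r t (T (Ut n r (-t) f))" by (simp add: dyn_def)
    also have "\<dots> = T (Ut n r t (Ut n r (-t) f))" using c Ut_l2[OF True] by (simp add: comm_def)
    also have "\<dots> = T f" by (simp add: Ut_inv True)
    finally show ?thesis .
  next
    case False thus ?thesis by (simp add: dyn_def Ut_out bop_zero[OF T] bop_out[OF T])
  qed
qed

definition Mset :: "nat \<Rightarrow> (nat \<Rightarrow> real) \<Rightarrow> op set" where
  "Mset n r = {T. bop n T \<and> comm n r T}"

lemma comm_limit:
  assumes X: "\<And>j. X j \<in> Mset n r" and T: "bop n T" and lim: "(\<lambda>j. opnorm n (op_diff (X j) T)) \<longlonglongrightarrow> 0"
  shows "comm n r T"
  unfolding comm_def
proof (intro allI ballI)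
  fix t f assume f: "f \<in> l2 n"
  let ?g = "Ut n r t f"
  have g: "?g \<in> l2 n" by (rule Ut_l2[OF f])
  show "Ut n r t (T f) = T ?g"
  proof
    fix m
    define D where "D j = op_diff (X j) T" for j
    have bD: "bop n (D j)" for j using X[of j] T by (auto simp: D_def Mset_def intro: bop_op_diff)
    have bnd: "cmod (Ut n r t (T f) m - T ?g m) \<le> opnorm n (D j) * (2 * l2norm f)" for j
    proof -
      have cX: "Ut n r t (X j f) = X j ?g" using X[of j] f by (auto simp: Mset_def comm_def)
      have bX: "bop n (X j)" using X[of j] by (simp add: Mset_def)
      have Xf: "X j f \<in> l2 n" by (rule bop_l2[OF bX f])
      have XjT: "X j h m - T h m = D j h m" for h by (simp add: D_def op_diff_def)
      have "Ut n r t (T f) m - T ?g m = ee n r t m * T f m - T ?g m"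
        by (simp add: Ut_in bop_l2[OF T f])
      also have "\<dots> = - (ee n r t m * D j f m) + D j ?g m"
        using fun_cong[OF cX, of m] XjT[of f] XjT[of ?g] unfolding Ut_in[OF Xf]
        by (simp add: algebra_simps)
      finally have "cmod (Ut n r t (T f) m - T ?g m) \<le> cmod (D j f m) + cmod (D j ?g m)"
        by (metis norm_triangle_ineq norm_minus_cancel norm_mult ee_norm mult_1)
      also have "\<dots> \<le> l2norm (D j f) + l2norm (D j ?g)"
        by (intro add_mono coord_le_l2norm l2_summ[OF bop_l2[OF bD f]] l2_summ[OF bop_l2[OF bD g]])
      also have "\<dots> \<le> opnorm n (D j) * l2norm f + opnorm n (D j) * l2norm ?g"
        by (intro add_mono opnorm_apply bD f g)
      also have "\<dots> = opnorm n (D j) * (2 * l2norm f)" by (simp add: Ut_l2norm f algebra_simps)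
      finally show ?thesis .
    qed
    have lim': "(\<lambda>j. opnorm n (D j) * (2 * l2norm f)) \<longlonglongrightarrow> 0 * (2 * l2norm f)"
      by (intro tendsto_mult tendsto_const) (use lim in \<open>simp add: D_def\<close>)
    have "cmod (Ut n r t (T f) m - T ?g m) \<le> 0 * (2 * l2norm f)"
      by (rule LIMSEQ_le_const[OF lim']) (use bnd in blast)
    thus "Ut n r t (T f) m = T ?g m" by simp
  qed
qed

lemma comm_add: assumes S: "bop n S" "comm n r S" and T: "bop n T" "comm n r T" shows "comm n r (op_add S T)"
  unfolding comm_def op_add_def
proof (intro allI ballI)
  fix t f assume f: "f \<in> l2 n"
  have "Ut n r t (\<lambda>q. S f q + T f q) = (\<lambda>q. Ut n r t (S f) q + Ut n r t (T f) q)"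
    using bop_add[OF bop_Ut bop_l2[OF S(1) f] bop_l2[OF T(1) f]] .
  also have "\<dots> = (\<lambda>q. S (Ut n r t f) q + T (Ut n r t f) q)" using S(2) T(2) f by (simp add: comm_def)
  finally show "Ut n r t (\<lambda>q. S f q + T f q) = (\<lambda>q. S (Ut n r t f) q + T (Ut n r t f) q)" .
qed

lemma comm_scale: assumes T: "bop n T" "comm n r T" shows "comm n r (op_scale c T)"
  unfolding comm_def op_scale_def
proof (intro allI ballI)
  fix t f assume f: "f \<in> l2 n"
  have "Ut n r t (\<lambda>q. c * T f q) = (\<lambda>q. c * Ut n r t (T f) q)" by (rule bop_scale[OF bop_Ut])
  also have "\<dots> = (\<lambda>q. c * T (Ut n r t f) q)" using T(2) f by (simp add: comm_def)
  finally show "Ut n r t (\<lambda>q. c * T f q) = (\<lambda>q. c * T (Ut n r t f) q)" .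
qed

lemma comm_comp: assumes S: "bop n S" "comm n r S" and T: "bop n T" "comm n r T" shows "comm n r (S \<circ> T)"
  unfolding comm_def
proof (intro allI ballI)
  fix t f assume f: "f \<in> l2 n"
  have "Ut n r t (S (T f)) = S (Ut n r t (T f))" using S(2) bop_l2[OF T(1) f] by (simp add: comm_def)
  also have "\<dots> = S (T (Ut n r t f))" using T(2) f by (simp add: comm_def)
  finally show "Ut n r t ((S \<circ> T) f) = (S \<circ> T) (Ut n r t f)" by simp
qed

lemma comm_adj: assumes T: "bop n T" "comm n r T" shows "comm n r (adj n T)"
  unfolding comm_def
proof (intro allI ballI)
  fix t g assume g: "g \<in> l2 n"
  have Ug: "Ut n r t g \<in> l2 n" by (rule Ut_l2[OF g])
  have h: "adj n T g \<in> l2 n" by (rule adj_prop(1)[OF T(1) g])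
  show "Ut n r t (adj n T g) = adj n T (Ut n r t g)"
  proof (rule adj_eqI[OF Ug Ut_l2[OF h], symmetric])
    fix f assume f: "f \<in> l2 n"
    have Uf: "Ut n r (-t) f \<in> l2 n" by (rule Ut_l2[OF f])
    have "inner2 (T f) (Ut n r t g) = inner2 (Ut n r (-t) (T f)) g" by (rule inner2_Ut[OF bop_l2[OF T(1) f] g])
    also have "\<dots> = inner2 (T (Ut n r (-t) f)) g" using T(2) f by (simp add: comm_def)
    also have "\<dots> = inner2 (Ut n r (-t) f) (adj n T g)" by (rule adj_prop(2)[OF T(1) g Uf])
    also have "\<dots> = inner2 f (Ut n r t (adj n T g))" by (rule inner2_Ut[OF f h, symmetric])
    finally show "inner2 (T f) (Ut n r t g) = inner2 f (Ut n r t (adj n T g))" .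
  qed
qed

lemma Mset_closed: "cstar_closed n (Mset n r)"
  unfolding cstar_closed_def
proof (intro conjI ballI allI impI)
  show "Mset n r \<subseteq> {T. bop n T}" by (auto simp: Mset_def)
  fix S T assume "S \<in> Mset n r" "T \<in> Mset n r"
  thus "op_add S T \<in> Mset n r" "S \<circ> T \<in> Mset n r"
    by (auto simp: Mset_def intro: comm_add comm_comp bop_op_add bop_comp)
next
  fix c T assume "T \<in> Mset n r"
  thus "op_scale c T \<in> Mset n r" by (auto simp: Mset_def intro: comm_scale bop_op_scale)
next
  fix T assume "T \<in> Mset n r"
  thus "adj n T \<in> Mset n r" by (auto simp: Mset_def intro: comm_adj bop_adj)
next
  fix X T assume "(\<forall>j. X j \<in> Mset n r) \<and> bop n T \<and> (\<lambda>j. opnorm n (op_diff (X j) T)) \<longlonglongrightarrow> 0"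
  thus "T \<in> Mset n r" using comm_limit[of X n r T] by (auto simp: Mset_def)
qed

lemma sigma_norm[simp]: "cmod (sigma n \<Theta> x y) = 1"
  by (simp add: sigma_def norm_exp_eq_Re)

lemma sigma_cnj_mult[simp]: "cnj (sigma n \<Theta> x y) * sigma n \<Theta> x y = 1"
proof -
  have "sigma n \<Theta> x y * cnj (sigma n \<Theta> x y) = complex_of_real ((cmod (sigma n \<Theta> x y))^2)"
    by (rule complex_norm_square[symmetric])
  thus ?thesis by (simp add: mult.commute)
qed

lemma Lop_app: "f \<in> l2 n \<Longrightarrow> Lop n \<Theta> p f = (\<lambda>m. if (\<forall>i. p i \<le> m i) then sigma n \<Theta> p (\<lambda>i. m i - p i) * f (\<lambda>i. m i - p i) else 0)"
  by (simp add: Lop_def)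
lemma Lop_out: "f \<notin> l2 n \<Longrightarrow> Lop n \<Theta> p f = (\<lambda>m. 0)"
  by (simp add: Lop_def)

definition shv :: "idx \<Rightarrow> idx \<Rightarrow> idx" where "shv p u = (\<lambda>i. u i + p i)"

lemma inj_shv: "inj (shv p)"
  unfolding shv_def inj_def
proof (intro allI impI ext)
  fix x y :: idx and i assume "(\<lambda>i. x i + p i) = (\<lambda>i. y i + p i)"
  hence "x i + p i = y i + p i" by (rule fun_cong)
  thus "x i = y i" by simp
qed

lemma range_shv: "range (shv p) = {m. \<forall>i. p i \<le> m i}"
proof (intro set_eqI iffI)
  fix m assume "m \<in> {m. \<forall>i. p i \<le> m i}"
  hence "m = shv p (\<lambda>i. m i - p i)" by (auto simp: shv_def)
  thus "m \<in> range (shv p)" by blast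
qed (auto simp: shv_def)

lemma Lop_sqn_has_sum:
  assumes p: "p \<in> Nn n" and f: "f \<in> l2 n"
  shows "(sqn (Lop n \<Theta> p f) has_sum NN f) UNIV"
proof -
  have "(sqn f has_sum NN f) UNIV" unfolding NN_def by (rule has_sum_infsum[OF l2_summ[OF f]])
  moreover have "sqn (Lop n \<Theta> p f) \<circ> shv p = sqn f"
    by (auto simp: sqn_def Lop_app[OF f] shv_def norm_mult)
  ultimately have "(sqn (Lop n \<Theta> p f) has_sum NN f) (range (shv p))"
    by (simp add: has_sum_reindex[OF inj_shv])
  thus ?thesis
    by (subst has_sum_cong_neutral[where T="range (shv p)"]) (auto simp: range_shv sqn_def Lop_app[OF f])
qed

lemma Lop_l2: assumes p: "p \<in> Nn n" and f: "f \<in> l2 n" shows "Lop n \<Theta> p f \<in> l2 n"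
proof (rule l2I)
  show "sqn (Lop n \<Theta> p f) summable_on UNIV" using Lop_sqn_has_sum[OF p f] by (rule has_sum_imp_summable)
  fix m assume m: "m \<notin> Nn n"
  then obtain i where i: "i \<ge> n" "m i \<noteq> 0" by (auto simp: Nn_def)
  have "p i = 0" using p i by (auto simp: Nn_def)
  hence "(\<lambda>i. m i - p i) \<notin> Nn n" using i by (auto simp: Nn_def)
  thus "Lop n \<Theta> p f m = 0" by (simp add: Lop_app[OF f] l2_supp[OF f])
qed

lemma Lop_l2norm: "p \<in> Nn n \<Longrightarrow> f \<in> l2 n \<Longrightarrow> l2norm (Lop n \<Theta> p f) = l2norm f"
  using Lop_sqn_has_sum by (simp add: l2norm_NN NN_def infsumI)

lemma bop_Lop: assumes p: "p \<in> Nn n" shows "bop n (Lop n \<Theta> p)"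
proof (rule bopI[where C=1])
  fix f g c assume f: "f \<in> l2 n" and g: "g \<in> l2 n"
  show "Lop n \<Theta> p (\<lambda>q. f q + c * g q) = (\<lambda>q. Lop n \<Theta> p f q + c * Lop n \<Theta> p g q)"
    by (rule ext) (simp add: Lop_app f g l2_lin algebra_simps)
qed (auto simp: Lop_l2 p Lop_l2norm Lop_out)

definition Ls :: "nat \<Rightarrow> (nat \<Rightarrow> nat \<Rightarrow> real) \<Rightarrow> idx \<Rightarrow> vec \<Rightarrow> vec" where
  "Ls n \<Theta> q g = (\<lambda>m. cnj (sigma n \<Theta> q m) * g (\<lambda>i. m i + q i))"

lemma Ls_l2: assumes g: "g \<in> l2 n" shows "Ls n \<Theta> q g \<in> l2 n"
proof (rule l2I)
  fix m assume m: "m \<notin> Nn n"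
  hence "(\<lambda>i. m i + q i) \<notin> Nn n" by (auto simp: Nn_def)
  thus "Ls n \<Theta> q g m = 0" by (simp add: Ls_def l2_supp[OF g])
next
  have "sqn g summable_on range (shv q)" by (rule summable_on_subset[OF l2_summ[OF g]]) simp
  hence "(sqn g \<circ> shv q) summable_on UNIV" by (simp add: summable_on_reindex[OF inj_shv])
  moreover have "sqn g \<circ> shv q = sqn (Ls n \<Theta> q g)" by (auto simp: sqn_def Ls_def shv_def norm_mult)
  ultimately show "sqn (Ls n \<Theta> q g) summable_on UNIV" by simp
qed

lemma adj_Lop: assumes q: "q \<in> Nn n" and g: "g \<in> l2 n" shows "adj n (Lop n \<Theta> q) g = Ls n \<Theta> q g"
proof (rule adj_eqI[OF g Ls_l2[OF g]])
  fix f assume f: "f \<in> l2 n"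
  have "inner2 (Lop n \<Theta> q f) g = infsum (\<lambda>m. cnj (Lop n \<Theta> q f m) * g m) (range (shv q))"
    unfolding inner2_def by (rule infsum_cong_neutral) (auto simp: range_shv Lop_app[OF f])
  also have "\<dots> = infsum ((\<lambda>m. cnj (Lop n \<Theta> q f m) * g m) \<circ> shv q) UNIV"
    by (rule infsum_reindex[OF inj_shv])
  also have "\<dots> = inner2 f (Ls n \<Theta> q g)"
    unfolding inner2_def by (rule infsum_cong) (simp add: Lop_app[OF f] shv_def Ls_def)
  finally show "inner2 (Lop n \<Theta> q f) g = inner2 f (Ls n \<Theta> q g)" .
qed

lemma adj_Lop_app: "q \<in> Nn n \<Longrightarrow> g \<in> l2 n \<Longrightarrow> adj n (Lop n \<Theta> q) g = (\<lambda>m. cnj (sigma n \<Theta> q m) * g (\<lambda>i. m i + q i))"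
  using adj_Lop by (simp add: Ls_def)

lemma bop_adjLop: "q \<in> Nn n \<Longrightarrow> bop n (adj n (Lop n \<Theta> q))"
  by (rule bop_adj[OF bop_Lop])

lemma pair_r_add: "pair_r n (\<lambda>i. m i + q i) r = pair_r n m r + pair_r n q r"
  by (simp add: pair_r_def sum.distrib algebra_simps)
lemma pair_r_diff: "(\<forall>i. p i \<le> m i) \<Longrightarrow> pair_r n (\<lambda>i. m i - p i) r = pair_r n m r - pair_r n p r"
  by (simp add: pair_r_def sum_subtractf[symmetric] of_nat_diff algebra_simps)

lemma Ut_Lop: assumes p: "p \<in> Nn n" and f: "f \<in> l2 n"
  shows "Ut n r t (Lop n \<Theta> p f) = (\<lambda>m. exp (\<i> * complex_of_real (t * pair_r n p r)) * Lop n \<Theta> p (Ut n r t f) m)"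
proof
  fix m
  show "Ut n r t (Lop n \<Theta> p f) m = exp (\<i> * complex_of_real (t * pair_r n p r)) * Lop n \<Theta> p (Ut n r t f) m"
  proof (cases "\<forall>i. p i \<le> m i")
    case True
    have "ee n r t m = exp (\<i> * complex_of_real (t * pair_r n p r)) * ee n r t (\<lambda>i. m i - p i)"
      unfolding ee_def pair_r_diff[OF True] exp_add[symmetric] by (simp add: algebra_simps)
    thus ?thesis using True
      unfolding Ut_in[OF Lop_l2[OF p f]] Lop_app[OF Ut_l2[OF f]] by (simp add: Lop_app[OF f] Ut_in[OF f])
  next
    case False thus ?thesis
      unfolding Ut_in[OF Lop_l2[OF p f]] Lop_app[OF Ut_l2[OF f]] by (simp add: Lop_app[OF f] Ut_in[OF f] if_not_P[OF False])
  qed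
qed

lemma Ut_Ls: assumes g: "g \<in> l2 n"
  shows "Ut n r t (Ls n \<Theta> q g) = (\<lambda>m. exp (\<i> * complex_of_real (- (t * pair_r n q r))) * Ls n \<Theta> q (Ut n r t g) m)"
proof
  fix m
  have "ee n r t m = exp (\<i> * complex_of_real (- (t * pair_r n q r))) * ee n r t (\<lambda>i. m i + q i)"
    unfolding ee_def pair_r_add exp_add[symmetric] by (simp add: algebra_simps)
  thus "Ut n r t (Ls n \<Theta> q g) m = exp (\<i> * complex_of_real (- (t * pair_r n q r))) * Ls n \<Theta> q (Ut n r t g) m"
    unfolding Ut_in[OF Ls_l2[OF g]] by (simp add: Ls_def Ut_in[OF g])
qed

lemma dyn_Lop: assumes p: "p \<in> Nn n"
  shows "dyn n r t (Lop n \<Theta> p) = op_scale (exp (\<i> * complex_of_real t * complex_of_real (pair_r n p r))) (Lop n \<Theta> p)"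
proof
  fix f show "dyn n r t (Lop n \<Theta> p) f = op_scale (exp (\<i> * complex_of_real t * complex_of_real (pair_r n p r))) (Lop n \<Theta> p) f"
  proof (cases "f \<in> l2 n")
    case True
    have "dyn n r t (Lop n \<Theta> p) f = Ut n r t (Lop n \<Theta> p (Ut n r (-t) f))" by (simp add: dyn_def)
    also have "\<dots> = (\<lambda>m. exp (\<i> * complex_of_real (t * pair_r n p r)) * Lop n \<Theta> p f m)"
      by (simp add: Ut_Lop p Ut_l2 True Ut_inv)
    finally show ?thesis by (simp add: op_scale_def mult.assoc)
  next
    case False thus ?thesis by (simp add: dyn_def Ut_out Lop_out op_scale_def bop_zero[OF bop_Lop[OF p]])
  qed
qed

lemma dyn_adjLop: assumes q: "q \<in> Nn n"
  shows "dyn n r t (adj n (Lop n \<Theta> q)) = op_scale (exp (\<i> * complex_of_real t * complex_of_real (- pair_r n q r))) (adj n (Lop n \<Theta> q))"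
proof
  fix f show "dyn n r t (adj n (Lop n \<Theta> q)) f = op_scale (exp (\<i> * complex_of_real t * complex_of_real (- pair_r n q r))) (adj n (Lop n \<Theta> q)) f"
  proof (cases "f \<in> l2 n")
    case True
    have "dyn n r t (adj n (Lop n \<Theta> q)) f = Ut n r t (Ls n \<Theta> q (Ut n r (-t) f))" by (simp add: dyn_def adj_Lop q Ut_l2 True)
    also have "\<dots> = (\<lambda>m. exp (\<i> * complex_of_real (- (t * pair_r n q r))) * Ls n \<Theta> q f m)"
      by (simp add: Ut_Ls Ut_l2 True Ut_inv)
    finally show ?thesis by (simp add: op_scale_def mult.assoc adj_Lop q True)
  next
    case False thus ?thesis by (simp add: dyn_def Ut_out adj_out op_scale_def bop_zero[OF bop_adjLop[OF q]])
  qed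
qed

lemma comm_Lop: assumes p: "p \<in> Nn n" and pr: "pair_r n p r = 0" shows "comm n r (Lop n \<Theta> p)"
  unfolding comm_def using Ut_Lop[OF p] pr by simp

lemma state_scale:
  assumes st: "is_state n (cstar_gen n G) \<phi>" and T: "T \<in> cstar_gen n G"
  shows "\<phi> (op_scale c T) = c * \<phi> T"
proof -
  let ?A = "cstar_gen n G"
  define Z where "Z = op_scale 0 T"
  have Z: "Z \<in> ?A" unfolding Z_def by (rule cstar_gen_scale[OF T])
  have lin: "\<phi> (op_add S (op_scale d U)) = \<phi> S + d * \<phi> U" if "S \<in> ?A" "U \<in> ?A" for S U d
    using st that by (simp add: is_state_def)
  have "op_add Z (op_scale 1 Z) = Z" by (auto simp: Z_def op_add_def op_scale_def)
  hence "\<phi> Z = \<phi> Z + 1 * \<phi> Z" using lin[OF Z Z, of 1] by simp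
  hence Z0: "\<phi> Z = 0" by simp
  have "op_add Z (op_scale c T) = op_scale c T" by (auto simp: Z_def op_add_def op_scale_def)
  thus ?thesis using lin[OF Z T, of c] Z0 by simp
qed

lemma comp_scale_right: "bop n B \<Longrightarrow> B \<circ> op_scale s T = op_scale s (B \<circ> T)"
  by (rule ext) (simp add: op_scale_def bop_scale[of n B s])

lemma comp_scale_left: "op_scale s T \<circ> B = op_scale s (T \<circ> B)"
  by (rule ext) (simp add: op_scale_def)

lemma op_entire_scale:
  assumes T: "bop n T"
  shows "op_entire n (\<lambda>z. op_scale (exp (\<i> * z * complex_of_real c)) T)"
  unfolding op_entire_def
proof
  fix z
  let ?e = "\<lambda>w. exp (\<i> * w * complex_of_real c)"
  let ?d = "\<i> * complex_of_real c * ?e z"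
  define D where "D = op_scale ?d T"
  define g where "g h = (?e (z + h) - ?e z) / h - ?d" for h
  have bD: "bop n D" unfolding D_def by (rule bop_op_scale[OF T])
  have der: "(?e has_field_derivative ?d) (at z)"
    by (auto intro!: derivative_eq_intros simp: algebra_simps)
  have glim: "(g \<longlongrightarrow> 0) (at 0)"
    using DERIV_D[OF der] unfolding g_def by (simp add: LIM_zero)
  have eq: "(\<lambda>f q. (op_scale (?e (z + h)) T f q - op_scale (?e z) T f q) / h - D f q) = op_scale (g h) T" for h
    by (auto simp: op_scale_def D_def g_def field_simps)
  have up: "opnorm n (op_scale (g h) T) \<le> cmod (g h) * opnorm n T" for h
    using opnorm_scale_le[OF T, of "g h"] by (simp add: op_scale_def)
  have lim2: "((\<lambda>h. cmod (g h) * opnorm n T) \<longlongrightarrow> 0 * opnorm n T) (at 0)"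
    by (intro tendsto_mult tendsto_const tendsto_norm_zero glim)
  have lim: "((\<lambda>h. opnorm n (op_scale (g h) T)) \<longlongrightarrow> 0) (at 0)"
    by (rule tendsto_sandwich[where f="\<lambda>h. 0" and h="\<lambda>h. cmod (g h) * opnorm n T"])
       (use up lim2 opnorm_nonneg[OF bop_op_scale[OF T]] in auto)
  show "\<exists>D. bop n D \<and> ((\<lambda>h. opnorm n (\<lambda>f q. (op_scale (?e (z + h)) T f q - op_scale (?e z) T f q) / h - D f q)) \<longlongrightarrow> 0) (at 0)"
  proof (rule exI[of _ D], intro conjI bD)
    have "(\<lambda>h. opnorm n (\<lambda>f q. (op_scale (?e (z + h)) T f q - op_scale (?e z) T f q) / h - D f q))
        = (\<lambda>h. opnorm n (op_scale (g h) T))" by (rule ext) (simp only: eq)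
    thus "((\<lambda>h. opnorm n (\<lambda>f q. (op_scale (?e (z + h)) T f q - op_scale (?e z) T f q) / h - D f q)) \<longlongrightarrow> 0) (at 0)"
      using lim by simp
  qed
qed

lemma eigen_KMS:
  assumes KMS: "is_KMS n r (cstar_gen n G) \<beta> \<phi>"
    and T: "T \<in> cstar_gen n G" "bop n T"
    and dynT: "\<And>t. dyn n r t T = op_scale (exp (\<i> * complex_of_real t * complex_of_real c)) T"
    and B: "B \<in> cstar_gen n G" "bop n B"
  shows "\<phi> (T \<circ> B) = exp (- complex_of_real (\<beta> * c)) * \<phi> (B \<circ> T)"
proof -
  define F where "F z = op_scale (exp (\<i> * z * complex_of_real c)) T" for z
  have Fe: "F = (\<lambda>z. op_scale (exp (\<i> * z * complex_of_real c)) T)" by (rule ext) (simp add: F_def)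
  have an: "analytic_ext n r (cstar_gen n G) T F"
    unfolding analytic_ext_def
    using T(1) cstar_gen_scale[OF T(1)] op_entire_scale[OF T(2)] dynT by (simp add: Fe)
  have "\<phi> (T \<circ> B) = \<phi> (B \<circ> F (\<i> * complex_of_real \<beta>))"
    using KMS an B(1) unfolding is_KMS_def by blast
  also have "F (\<i> * complex_of_real \<beta>) = op_scale (exp (- complex_of_real (\<beta> * c))) T"
    by (simp add: F_def)
  also have "B \<circ> op_scale (exp (- complex_of_real (\<beta> * c))) T = op_scale (exp (- complex_of_real (\<beta> * c))) (B \<circ> T)"
    by (rule comp_scale_right[OF B(2)])
  also have "\<phi> \<dots> = exp (- complex_of_real (\<beta> * c)) * \<phi> (B \<circ> T)"
    by (rule state_scale[OF _ cstar_gen_comp[OF B(1) T(1)]]) (use KMS in \<open>simp add: is_KMS_def\<close>)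
  finally show ?thesis .
qed

definition ex :: "real \<Rightarrow> complex" where "ex x = exp (\<i> * complex_of_real x)"

lemma ex_add: "ex a * ex b = ex (a + b)"
  by (simp add: ex_def exp_add[symmetric] algebra_simps)
lemma ex_norm[simp]: "cmod (ex a) = 1" by (simp add: ex_def)
lemma ex_zero[simp]: "ex 0 = 1" by (simp add: ex_def)
lemma sigma_ex: "sigma n \<Theta> x y = ex (- (pi * pair_Theta n \<Theta> x y))"
  by (simp add: sigma_def ex_def algebra_simps)
lemma cnj_sigma_ex: "cnj (sigma n \<Theta> x y) = ex (pi * pair_Theta n \<Theta> x y)"
  by (simp add: sigma_def ex_def exp_cnj algebra_simps)

lemma PT_addL: "pair_Theta n \<Theta> (\<lambda>i. x i + y i) z = pair_Theta n \<Theta> x z + pair_Theta n \<Theta> y z"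
  by (simp add: pair_Theta_def sum.distrib[symmetric] algebra_simps)
lemma PT_addR: "pair_Theta n \<Theta> z (\<lambda>i. x i + y i) = pair_Theta n \<Theta> z x + pair_Theta n \<Theta> z y"
  by (simp add: pair_Theta_def sum.distrib[symmetric] algebra_simps)
lemma PT_zeroL[simp]: "pair_Theta n \<Theta> (\<lambda>i. 0) z = 0" by (simp add: pair_Theta_def)
lemma PT_zeroR[simp]: "pair_Theta n \<Theta> z (\<lambda>i. 0) = 0" by (simp add: pair_Theta_def)

lemma Nn_add: "x \<in> Nn n \<Longrightarrow> y \<in> Nn n \<Longrightarrow> (\<lambda>i. x i + y i) \<in> Nn n" by (simp add: Nn_def)

lemma LL:
  assumes u: "u \<in> Nn n" and v: "v \<in> Nn n"
  shows "Lop n \<Theta> u \<circ> Lop n \<Theta> v = op_scale (sigma n \<Theta> u v) (Lop n \<Theta> (\<lambda>i. u i + v i))"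
proof (rule ext)
  fix f
  show "(Lop n \<Theta> u \<circ> Lop n \<Theta> v) f = op_scale (sigma n \<Theta> u v) (Lop n \<Theta> (\<lambda>i. u i + v i)) f"
  proof (cases "f \<in> l2 n")
    case False thus ?thesis by (simp add: Lop_out op_scale_def bop_zero[OF bop_Lop[OF u]])
  next
    case f: True
    show ?thesis
    proof
      fix m
      have L1: "(Lop n \<Theta> u \<circ> Lop n \<Theta> v) f m = (if \<forall>i. u i \<le> m i then sigma n \<Theta> u (\<lambda>i. m i - u i) * Lop n \<Theta> v f (\<lambda>i. m i - u i) else 0)"
        by (simp only: comp_apply Lop_app[OF Lop_l2[OF v f]])
      show "(Lop n \<Theta> u \<circ> Lop n \<Theta> v) f m = op_scale (sigma n \<Theta> u v) (Lop n \<Theta> (\<lambda>i. u i + v i)) f m"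
      proof (cases "\<forall>i. u i + v i \<le> m i")
        case TT: True
        define W where "W = (\<lambda>i. m i - (u i + v i))"
        have e1: "(\<lambda>i. m i - u i) = (\<lambda>i. W i + v i)" using TT by (auto simp: W_def)
        have e2: "(\<lambda>i. W i + v i - v i) = W" by auto
        have c1: "\<forall>i. u i \<le> m i" "\<forall>i. v i \<le> W i + v i"
        proof -
          show "\<forall>i. u i \<le> m i"
          proof
            fix i have "u i + v i \<le> m i" using TT by blast
            thus "u i \<le> m i" by simp
          qed
        qed simp
        have ph: "sigma n \<Theta> u (\<lambda>i. W i + v i) * sigma n \<Theta> v W = sigma n \<Theta> u v * sigma n \<Theta> (\<lambda>i. u i + v i) W"
          by (simp add: sigma_ex ex_add PT_addL PT_addR algebra_simps)
        show ?thesis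
          using c1 TT ph
          unfolding L1 by (simp add: op_scale_def Lop_app[OF f] e1 e2 W_def[symmetric] mult.assoc[symmetric])
      next
        case False
        have "\<not> ((\<forall>i. u i \<le> m i) \<and> (\<forall>i. v i \<le> m i - u i))"
        proof
          assume H: "(\<forall>i. u i \<le> m i) \<and> (\<forall>i. v i \<le> m i - u i)"
          obtain i where i: "\<not> u i + v i \<le> m i" using False by blast
          have "u i \<le> m i" "v i \<le> m i - u i" using H by auto
          thus False using i by linarith
        qed
        thus ?thesis using False unfolding L1
          by (auto simp: op_scale_def Lop_app[OF f])
      qed
    qed
  qed
qed

lemma adjLop_l2: "q \<in> Nn n \<Longrightarrow> g \<in> l2 n \<Longrightarrow> adj n (Lop n \<Theta> q) g \<in> l2 n"
  by (rule bop_l2[OF bop_adjLop])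

lemma AA:
  assumes u: "u \<in> Nn n" and v: "v \<in> Nn n"
  shows "adj n (Lop n \<Theta> u) \<circ> adj n (Lop n \<Theta> v) = op_scale (cnj (sigma n \<Theta> v u)) (adj n (Lop n \<Theta> (\<lambda>i. v i + u i)))"
proof (rule ext)
  fix g
  show "(adj n (Lop n \<Theta> u) \<circ> adj n (Lop n \<Theta> v)) g = op_scale (cnj (sigma n \<Theta> v u)) (adj n (Lop n \<Theta> (\<lambda>i. v i + u i))) g"
  proof (cases "g \<in> l2 n")
    case False thus ?thesis by (simp add: adj_out op_scale_def bop_zero[OF bop_adjLop[OF u]])
  next
    case g: True
    have vu: "(\<lambda>i. v i + u i) \<in> Nn n" by (rule Nn_add[OF v u])
    show ?thesis
    proof
      fix m
      have L1: "(adj n (Lop n \<Theta> u) \<circ> adj n (Lop n \<Theta> v)) g m = cnj (sigma n \<Theta> u m) * (cnj (sigma n \<Theta> v (\<lambda>i. m i + u i)) * g (\<lambda>i. m i + u i + v i))"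
        by (simp only: comp_apply adj_Lop_app[OF u adjLop_l2[OF v g]]) (simp add: adj_Lop_app[OF v g])
      have ix: "(\<lambda>i. m i + u i + v i) = (\<lambda>i. m i + (v i + u i))" by (auto simp: algebra_simps)
      have ph: "cnj (sigma n \<Theta> u m) * cnj (sigma n \<Theta> v (\<lambda>i. m i + u i)) = cnj (sigma n \<Theta> v u) * cnj (sigma n \<Theta> (\<lambda>i. v i + u i) m)"
        by (simp add: cnj_sigma_ex ex_add PT_addL PT_addR algebra_simps)
      show "(adj n (Lop n \<Theta> u) \<circ> adj n (Lop n \<Theta> v)) g m = op_scale (cnj (sigma n \<Theta> v u)) (adj n (Lop n \<Theta> (\<lambda>i. v i + u i))) g m"
        unfolding L1 op_scale_def adj_Lop_app[OF vu g] ix using ph by (simp add: mult.assoc[symmetric])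
    qed
  qed
qed

definition Idop :: "nat \<Rightarrow> op" where "Idop n = (\<lambda>f. if f \<in> l2 n then f else (\<lambda>q. 0))"

lemma comp_Idop: "bop n X \<Longrightarrow> X \<circ> Idop n = X"
  by (rule ext) (simp add: Idop_def bop_out bop_zero)

lemma AL_self:
  assumes p: "p \<in> Nn n"
  shows "adj n (Lop n \<Theta> p) \<circ> Lop n \<Theta> p = Idop n"
proof (rule ext)
  fix f show "(adj n (Lop n \<Theta> p) \<circ> Lop n \<Theta> p) f = Idop n f"
  proof (cases "f \<in> l2 n")
    case False thus ?thesis by (simp add: Idop_def Lop_out bop_zero[OF bop_adjLop[OF p]])
  next
    case f: True
    show ?thesis
    proof
      fix u
      have L1: "(adj n (Lop n \<Theta> p) \<circ> Lop n \<Theta> p) f u = cnj (sigma n \<Theta> p u) * Lop n \<Theta> p f (\<lambda>i. u i + p i)"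
        by (simp only: comp_apply adj_Lop_app[OF p Lop_l2[OF p f]])
      have ix: "(\<lambda>i. u i + p i - p i) = u" by auto
      show "(adj n (Lop n \<Theta> p) \<circ> Lop n \<Theta> p) f u = Idop n f u"
        unfolding L1 by (simp add: Lop_app[OF f] ix Idop_def f mult.assoc[symmetric])
    qed
  qed
qed

lemma AL:
  assumes a: "a \<in> Nn n" and b: "b \<in> Nn n" and c: "c \<in> Nn n" and disj: "\<forall>i. a i = 0 \<or> b i = 0"
  shows "adj n (Lop n \<Theta> (\<lambda>i. b i + c i)) \<circ> Lop n \<Theta> (\<lambda>i. a i + c i)
       = op_scale (ex (pi * (pair_Theta n \<Theta> c a - pair_Theta n \<Theta> c b - pair_Theta n \<Theta> a b + pair_Theta n \<Theta> b a)))
           (Lop n \<Theta> a \<circ> adj n (Lop n \<Theta> b))"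
    (is "adj n (Lop n \<Theta> ?q) \<circ> Lop n \<Theta> ?p = op_scale ?w _")
proof (rule ext)
  have p: "?p \<in> Nn n" by (rule Nn_add[OF a c])
  have q: "?q \<in> Nn n" by (rule Nn_add[OF b c])
  fix f
  show "(adj n (Lop n \<Theta> ?q) \<circ> Lop n \<Theta> ?p) f = op_scale ?w (Lop n \<Theta> a \<circ> adj n (Lop n \<Theta> b)) f"
  proof (cases "f \<in> l2 n")
    case False thus ?thesis by (simp add: Lop_out adj_out op_scale_def bop_zero[OF bop_adjLop[OF q]] bop_zero[OF bop_Lop[OF a]])
  next
    case f: True
    show ?thesis
    proof
      fix u
      have L1: "(adj n (Lop n \<Theta> ?q) \<circ> Lop n \<Theta> ?p) f u = cnj (sigma n \<Theta> ?q u) * Lop n \<Theta> ?p f (\<lambda>i. u i + ?q i)"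
        by (simp only: comp_apply adj_Lop_app[OF q Lop_l2[OF p f]])
      have R1: "(Lop n \<Theta> a \<circ> adj n (Lop n \<Theta> b)) f u = (if \<forall>i. a i \<le> u i then sigma n \<Theta> a (\<lambda>i. u i - a i) * adj n (Lop n \<Theta> b) f (\<lambda>i. u i - a i) else 0)"
        by (simp only: comp_apply Lop_app[OF adjLop_l2[OF b f]])
      show "(adj n (Lop n \<Theta> ?q) \<circ> Lop n \<Theta> ?p) f u = op_scale ?w (Lop n \<Theta> a \<circ> adj n (Lop n \<Theta> b)) f u"
      proof (cases "\<forall>i. a i \<le> u i")
        case au: True
        define W where "W = (\<lambda>i. u i - a i)"
        have uW: "u = (\<lambda>i. W i + a i)" using au by (auto simp: W_def)
        have cond: "\<forall>i. a i + c i \<le> u i + (b i + c i)" using au by (auto intro: trans_le_add1)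
        have ix: "(\<lambda>i. u i + (b i + c i) - (a i + c i)) = (\<lambda>i. W i + b i)"
          using au by (auto simp: W_def)
        have ph: "cnj (sigma n \<Theta> ?q (\<lambda>i. W i + a i)) * sigma n \<Theta> ?p (\<lambda>i. W i + b i)
             = ?w * (sigma n \<Theta> a W * cnj (sigma n \<Theta> b W))"
          unfolding cnj_sigma_ex unfolding sigma_ex
          apply (simp only: mult.assoc[symmetric] ex_add)
          apply (rule arg_cong[where f=ex])
          by (simp add: PT_addL PT_addR algebra_simps)
        have L2: "(adj n (Lop n \<Theta> ?q) \<circ> Lop n \<Theta> ?p) f u = cnj (sigma n \<Theta> ?q u) * (sigma n \<Theta> ?p (\<lambda>i. W i + b i) * f (\<lambda>i. W i + b i))"
          unfolding L1 Lop_app[OF f] using cond ix by simp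
        have R2: "(Lop n \<Theta> a \<circ> adj n (Lop n \<Theta> b)) f u = sigma n \<Theta> a W * (cnj (sigma n \<Theta> b W) * f (\<lambda>i. W i + b i))"
          unfolding R1 adj_Lop_app[OF b f] using au by (simp add: W_def)
        show ?thesis unfolding L2 op_scale_def R2
          using ph uW by (simp add: mult.assoc[symmetric])
      next
        case nau: False
        then obtain i where i: "\<not> a i \<le> u i" by blast
        hence "b i = 0" using disj by (metis le0)
        hence c1: "\<not> (\<forall>i. a i + c i \<le> u i + (b i + c i))" using i by (metis add_le_cancel_right add_0)
        show ?thesis by (simp only: L1 R1 op_scale_def Lop_app[OF f] if_not_P[OF c1] if_not_P[OF nau]) simp
      qed
    qed
  qed
qed

lemma op_scale_scale: "op_scale s (op_scale t X) = op_scale (s * t) X"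
  by (rule ext) (simp add: op_scale_def mult.assoc)

lemma op_scale_one: "op_scale 1 X = X" by (rule ext) (simp add: op_scale_def)

lemma scale_comp_scale: "bop n X \<Longrightarrow> op_scale s X \<circ> op_scale t Y = op_scale (s * t) (X \<circ> Y)"
  by (simp add: comp_scale_left comp_scale_right op_scale_scale)

lemma unit_ne_zero:
  fixes s t z :: complex
  assumes "cmod s = 1" "cmod t \<noteq> 1" "s * z = t * z"
  shows "z = 0"
proof (rule ccontr)
  assume "z \<noteq> 0" hence "s = t" using assms(3) by simp
  thus False using assms(1,2) by simp
qed

lemma pr_nonneg:
  assumes a: "a \<in> Nn k" and r: "\<forall>j<k. r j > 0"
  shows "0 \<le> pair_r n a r"
  unfolding pair_r_def
proof (rule sum_nonneg)
  fix i assume "i \<in> {..<n}"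
  show "0 \<le> real (a i) * r i"
  proof (cases "i < k")
    case True thus ?thesis using r by (simp add: less_imp_le)
  next
    case False thus ?thesis using a by (simp add: Nn_def)
  qed
qed

lemma pr_pos:
  assumes a: "a \<in> Nn k" and r: "\<forall>j<k. r j > 0" and kn: "k \<le> n" and nz: "a \<noteq> (\<lambda>i. 0)"
  shows "0 < pair_r n a r"
proof -
  obtain i where i: "a i \<noteq> 0" using nz by auto
  have ik: "i < k" using a i by (auto simp: Nn_def not_less[symmetric])
  have nn: "0 \<le> real (a j) * r j" for j
  proof (cases "j < k")
    case True thus ?thesis using r by (simp add: less_imp_le)
  next
    case False thus ?thesis using a by (simp add: Nn_def)
  qed
  have "0 < real (a i) * r i" using i r ik by simp
  thus ?thesis unfolding pair_r_def by (intro sum_pos2[where i=i]) (use ik kn nn in auto)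
qed

lemma Nn_mono: "k \<le> n \<Longrightarrow> p \<in> Nn k \<Longrightarrow> p \<in> Nn n" by (simp add: Nn_def)

theorem proposition3p3:
  fixes k d n :: nat and \<Theta> :: "nat \<Rightarrow> nat \<Rightarrow> real" and r :: "nat \<Rightarrow> real"
    and \<beta> :: real and \<phi> :: "op \<Rightarrow> complex"
  assumes n_def: "n = k + d"
    and antisym: "\<forall>i<n. \<forall>j<n. \<Theta> i j = - \<Theta> j i"
    and r_pos: "\<forall>j<k. r j > 0"
    and r_zero: "\<forall>j. k \<le> j \<longrightarrow> r j = 0"
    and beta_pos: "0 < \<beta>"
    and KMS: "is_KMS n r (Toeplitz n \<Theta>) \<beta> \<phi>"
  shows "(\<forall>S\<in>cstar_gen n {Lop n \<Theta> x | x. x \<in> Nn n \<and> (\<forall>i<k. x i = 0)}.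
            \<forall>T\<in>cstar_gen n {Lop n \<Theta> x | x. x \<in> Nn n \<and> (\<forall>i<k. x i = 0)}.
              \<phi> (S \<circ> T) = \<phi> (T \<circ> S))
      \<and> (\<forall>p q x y. p \<in> Nn k \<and> q \<in> Nn k \<and> x \<in> Nn n \<and> (\<forall>i<k. x i = 0)
              \<and> y \<in> Nn n \<and> (\<forall>i<k. y i = 0) \<longrightarrow>
            \<phi> (Lop n \<Theta> p \<circ> Lop n \<Theta> x \<circ> adj n (Lop n \<Theta> y) \<circ> adj n (Lop n \<Theta> q))
              = (if p = q then exp (- (complex_of_real (\<beta> * pair_r n p r))) else 0)
                * \<phi> (Lop n \<Theta> x \<circ> adj n (Lop n \<Theta> y)))"
proof -
  define G where "G = {Lop n \<Theta> p | p. p \<in> Nn n}"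
  define Gs where "Gs = {Lop n \<Theta> x | x. x \<in> Nn n \<and> (\<forall>i<k. x i = 0)}"
  have KMS': "is_KMS n r (cstar_gen n G) \<beta> \<phi>" using KMS by (simp add: Toeplitz_def G_def)
  have kn: "k \<le> n" using n_def by simp
  have st: "is_state n (cstar_gen n G) \<phi>" using KMS' by (simp add: is_KMS_def)
  have LT: "Lop n \<Theta> p \<in> cstar_gen n G" if "p \<in> Nn n" for p
    using cstar_gen_sub[of G n] that by (auto simp: G_def)
  have AT: "adj n (Lop n \<Theta> p) \<in> cstar_gen n G" if "p \<in> Nn n" for p
    by (rule cstar_gen_adj[OF LT[OF that]])
  have part1: "\<phi> (S \<circ> T) = \<phi> (T \<circ> S)" if S: "S \<in> cstar_gen n Gs" and T: "T \<in> cstar_gen n Gs" for S T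
  proof -
    have sub: "Gs \<subseteq> Mset n r"
    proof
      fix X assume "X \<in> Gs"
      then obtain x where x: "X = Lop n \<Theta> x" "x \<in> Nn n" "\<forall>i<k. x i = 0" by (auto simp: Gs_def)
      have "pair_r n x r = 0" unfolding pair_r_def
      proof (rule sum.neutral, rule ballI)
        fix i show "real (x i) * r i = 0" by (cases "i < k") (auto simp: x(3) r_zero)
      qed
      thus "X \<in> Mset n r" using x by (auto simp: Mset_def bop_Lop comm_Lop)
    qed
    have CM: "cstar_gen n Gs \<subseteq> Mset n r" by (rule cstar_gen_least[OF Mset_closed sub])
    have CT: "cstar_gen n Gs \<subseteq> cstar_gen n G" by (rule cstar_gen_mono) (auto simp: Gs_def G_def)
    have good: "U \<in> cstar_gen n G" "bop n U" "\<And>t. dyn n r t U = op_scale (exp (\<i> * complex_of_real t * complex_of_real 0)) U"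
      if "U \<in> cstar_gen n Gs" for U
      using that CM CT comm_dyn[of n U r] by (auto simp: Mset_def op_scale_one)
    show ?thesis using eigen_KMS[OF KMS' good(1,2)[OF S] good(3)[OF S] good(1,2)[OF T]] by simp
  qed
  have part2: "\<phi> (Lop n \<Theta> p \<circ> Lop n \<Theta> x \<circ> adj n (Lop n \<Theta> y) \<circ> adj n (Lop n \<Theta> q))
              = (if p = q then exp (- (complex_of_real (\<beta> * pair_r n p r))) else 0)
                * \<phi> (Lop n \<Theta> x \<circ> adj n (Lop n \<Theta> y))"
    if pk: "p \<in> Nn k" and qk: "q \<in> Nn k" and x: "x \<in> Nn n" "\<forall>i<k. x i = 0" and y: "y \<in> Nn n" "\<forall>i<k. y i = 0" for p q x y
  proof -
    let ?L = "Lop n \<Theta>"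
    let ?A = "\<lambda>v. adj n (Lop n \<Theta> v)"
    have p: "p \<in> Nn n" and q: "q \<in> Nn n" using pk qk kn by (auto intro: Nn_mono)
    have bL: "bop n (?L v)" if "v \<in> Nn n" for v using bop_Lop[OF that] .
    have bA: "bop n (?A v)" if "v \<in> Nn n" for v using bop_adjLop[OF that] .
    have gL: "\<phi> (?L p \<circ> ?L x \<circ> ?A y \<circ> ?A q) = \<phi> (?L p \<circ> (?L x \<circ> (?A y \<circ> ?A q)))" by (simp only: o_assoc)
    have E1: "\<phi> (?L p \<circ> (?L x \<circ> (?A y \<circ> ?A q))) = exp (- complex_of_real (\<beta> * pair_r n p r)) * \<phi> ((?L x \<circ> (?A y \<circ> ?A q)) \<circ> ?L p)"
      by (rule eigen_KMS[OF KMS' LT[OF p] bL[OF p] dyn_Lop[OF p]])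
         (intro cstar_gen_comp LT AT x y q bop_comp bL bA)+
    show ?thesis
    proof (cases "p = q")
      case True
      have "(?L x \<circ> (?A y \<circ> ?A q)) \<circ> ?L p = ?L x \<circ> (?A y \<circ> (?A p \<circ> ?L p))" using True by (simp only: o_assoc)
      also have "\<dots> = ?L x \<circ> ?A y" by (simp only: AL_self[OF p] comp_Idop[OF bA[OF y(1)]])
      finally show ?thesis using gL E1 True by simp
    next
      case False
      define c where "c = (\<lambda>i. min (p i) (q i))"
      define a where "a = (\<lambda>i. p i - c i)"
      define b where "b = (\<lambda>i. q i - c i)"
      have ak: "a \<in> Nn k" and bk: "b \<in> Nn k" and ck: "c \<in> Nn k" using pk qk by (auto simp: Nn_def a_def b_def c_def)
      have a: "a \<in> Nn n" and b: "b \<in> Nn n" and c: "c \<in> Nn n" using ak bk ck kn by (auto intro: Nn_mono)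
      have pe: "p = (\<lambda>i. a i + c i)" and qe: "q = (\<lambda>i. b i + c i)" by (auto simp: a_def b_def c_def)
      have disj: "\<forall>i. a i = 0 \<or> b i = 0" by (auto simp: a_def b_def c_def)
      have ab: "a \<noteq> (\<lambda>i. 0) \<or> b \<noteq> (\<lambda>i. 0)" using False pe qe by auto
      have ay: "\<forall>i. a i = 0 \<or> y i = 0"
      proof
        fix i show "a i = 0 \<or> y i = 0" using ak y(2) by (cases "i < k") (auto simp: Nn_def)
      qed
      have xb: "\<forall>i. x i = 0 \<or> b i = 0"
      proof
        fix i show "x i = 0 \<or> b i = 0" using bk x(2) by (cases "i < k") (auto simp: Nn_def)
      qed
      have zc: "(\<lambda>i::nat. 0::nat) \<in> Nn n" by (simp add: Nn_def)
      define u where "u = (\<lambda>i. x i + a i)"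
      define v where "v = (\<lambda>i. b i + y i)"
      have u: "u \<in> Nn n" and v: "v \<in> Nn n" using x y a b by (auto simp: u_def v_def intro: Nn_add)
      define N where "N = ?L u \<circ> ?A v"
      have NT: "N \<in> cstar_gen n G" unfolding N_def by (intro cstar_gen_comp LT AT u v)
      have AL': "?A w \<circ> ?L z = op_scale (ex (pi * (pair_Theta n \<Theta> (\<lambda>i. 0) z - pair_Theta n \<Theta> (\<lambda>i. 0) w - pair_Theta n \<Theta> z w + pair_Theta n \<Theta> w z))) (?L z \<circ> ?A w)"
        if "z \<in> Nn n" "w \<in> Nn n" "\<forall>i. z i = 0 \<or> w i = 0" for z w
        using AL[OF that(1,2) zc that(3), of \<Theta>] by simp
      obtain w1 where w1: "?A q \<circ> ?L p = op_scale w1 (?L a \<circ> ?A b)"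
        using AL[OF a b c disj, of \<Theta>] pe qe by blast
      obtain w2 where w2: "?A y \<circ> ?L a = op_scale w2 (?L a \<circ> ?A y)"
        using AL'[OF a y(1) ay] by blast
      have LL1: "?L x \<circ> ?L a = op_scale (sigma n \<Theta> x a) (?L u)" using LL[OF x(1) a] by (simp add: u_def)
      have AA1: "?A y \<circ> ?A b = op_scale (cnj (sigma n \<Theta> b y)) (?A v)" using AA[OF y(1) b] by (simp add: v_def)
      have "(?L x \<circ> (?A y \<circ> ?A q)) \<circ> ?L p = ?L x \<circ> (?A y \<circ> (?A q \<circ> ?L p))" by (simp only: o_assoc)
      also have "\<dots> = ?L x \<circ> (?A y \<circ> op_scale w1 (?L a \<circ> ?A b))" by (simp only: w1)
      also have "\<dots> = op_scale w1 (?L x \<circ> ((?A y \<circ> ?L a) \<circ> ?A b))"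
        by (simp only: comp_scale_right[OF bA[OF y(1)]] comp_scale_right[OF bL[OF x(1)]] o_assoc)
      also have "\<dots> = op_scale w1 (op_scale w2 ((?L x \<circ> ?L a) \<circ> (?A y \<circ> ?A b)))"
        by (simp only: w2 comp_scale_left comp_scale_right[OF bL[OF x(1)]] o_assoc)
      also have "\<dots> = op_scale (w1 * w2 * (sigma n \<Theta> x a * cnj (sigma n \<Theta> b y))) N"
        by (simp only: LL1 AA1 scale_comp_scale[OF bL[OF u]] op_scale_scale N_def mult.assoc)
      finally have ZL: "(?L x \<circ> (?A y \<circ> ?A q)) \<circ> ?L p = op_scale (w1 * w2 * (sigma n \<Theta> x a * cnj (sigma n \<Theta> b y))) N" .
      have N0: "\<phi> N = 0"
      proof (cases "a = (\<lambda>i. 0)")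
        case False
        have prpos: "0 < pair_r n a r" by (rule pr_pos[OF ak r_pos kn False])
        have av: "\<forall>i. a i = 0 \<or> v i = 0"
        proof
          fix i show "a i = 0 \<or> v i = 0" using ay[rule_format, of i] disj[rule_format, of i] by (auto simp: v_def)
        qed
        obtain w3 where w3: "?A v \<circ> ?L a = op_scale w3 (?L a \<circ> ?A v)" and w3n: "cmod w3 = 1"
          using AL'[OF a v av] by (metis ex_norm)
        have LL2: "?L a \<circ> ?L x = op_scale (sigma n \<Theta> a x) (?L u)" using LL[OF a x(1)] by (simp add: u_def add.commute)
        have K: "\<phi> (?L a \<circ> (?L x \<circ> ?A v)) = exp (- complex_of_real (\<beta> * pair_r n a r)) * \<phi> ((?L x \<circ> ?A v) \<circ> ?L a)"
          by (rule eigen_KMS[OF KMS' LT[OF a] bL[OF a] dyn_Lop[OF a]])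
             (intro cstar_gen_comp LT AT x y v bop_comp bL bA)+
        have "?L a \<circ> (?L x \<circ> ?A v) = op_scale (sigma n \<Theta> a x) N"
          by (simp only: o_assoc LL2 comp_scale_left N_def)
        hence K1: "\<phi> (?L a \<circ> (?L x \<circ> ?A v)) = sigma n \<Theta> a x * \<phi> N"
          by (simp add: state_scale[OF st NT])
        have "(?L x \<circ> ?A v) \<circ> ?L a = op_scale (w3 * sigma n \<Theta> x a) N"
          by (simp only: comp_assoc w3 comp_scale_right[OF bL[OF x(1)]]) (simp only: o_assoc LL1 comp_scale_left op_scale_scale N_def)
        hence K2: "\<phi> ((?L x \<circ> ?A v) \<circ> ?L a) = (w3 * sigma n \<Theta> x a) * \<phi> N"
          by (simp add: state_scale[OF st NT])
        have "sigma n \<Theta> a x * \<phi> N = (exp (- complex_of_real (\<beta> * pair_r n a r)) * (w3 * sigma n \<Theta> x a)) * \<phi> N"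
          using K K1 K2 by simp
        moreover have "cmod (exp (- complex_of_real (\<beta> * pair_r n a r)) * (w3 * sigma n \<Theta> x a)) \<noteq> 1"
          using prpos beta_pos w3n by (simp add: norm_mult)
        ultimately show ?thesis by (intro unit_ne_zero[of "sigma n \<Theta> a x"]) simp_all
      next
        case True
        hence bnz: "b \<noteq> (\<lambda>i. 0)" using ab by simp
        have ux: "u = x" using True by (simp add: u_def)
        have prpos: "0 < pair_r n b r" by (rule pr_pos[OF bk r_pos kn bnz])
        obtain w4 where w4: "?A b \<circ> ?L x = op_scale w4 (?L x \<circ> ?A b)" and w4n: "cmod w4 = 1"
          using AL'[OF x(1) b xb] by (metis ex_norm)
        have AA2: "?A b \<circ> ?A y = op_scale (cnj (sigma n \<Theta> y b)) (?A v)" using AA[OF b y(1)] by (simp add: v_def add.commute)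
        have K: "\<phi> (?A b \<circ> (?L x \<circ> ?A y)) = exp (- complex_of_real (\<beta> * - pair_r n b r)) * \<phi> ((?L x \<circ> ?A y) \<circ> ?A b)"
          by (rule eigen_KMS[OF KMS' AT[OF b] bA[OF b] dyn_adjLop[OF b]])
             (intro cstar_gen_comp LT AT x y bop_comp bL bA)+
        have "?A b \<circ> (?L x \<circ> ?A y) = op_scale (w4 * cnj (sigma n \<Theta> y b)) N"
          by (simp only: o_assoc w4 comp_scale_left) (simp only: comp_assoc AA2 comp_scale_right[OF bL[OF x(1)]] op_scale_scale N_def ux)
        hence K1: "\<phi> (?A b \<circ> (?L x \<circ> ?A y)) = (w4 * cnj (sigma n \<Theta> y b)) * \<phi> N"
          by (simp add: state_scale[OF st NT])
        have "(?L x \<circ> ?A y) \<circ> ?A b = op_scale (cnj (sigma n \<Theta> b y)) N"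
          by (simp only: comp_assoc AA1 comp_scale_right[OF bL[OF x(1)]] N_def ux)
        hence K2: "\<phi> ((?L x \<circ> ?A y) \<circ> ?A b) = cnj (sigma n \<Theta> b y) * \<phi> N"
          by (simp add: state_scale[OF st NT])
        have "(w4 * cnj (sigma n \<Theta> y b)) * \<phi> N = (exp (- complex_of_real (\<beta> * - pair_r n b r)) * cnj (sigma n \<Theta> b y)) * \<phi> N"
          using K K1 K2 by simp
        moreover have "cmod (exp (- complex_of_real (\<beta> * - pair_r n b r)) * cnj (sigma n \<Theta> b y)) \<noteq> 1"
          using prpos beta_pos by (simp add: norm_mult)
        moreover have "cmod (w4 * cnj (sigma n \<Theta> y b)) = 1" using w4n by (simp add: norm_mult)
        ultimately show ?thesis by (intro unit_ne_zero[of "w4 * cnj (sigma n \<Theta> y b)"]) simp_all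
      qed
      have "\<phi> ((?L x \<circ> (?A y \<circ> ?A q)) \<circ> ?L p) = 0"
        unfolding ZL by (simp add: state_scale[OF st NT] N0)
      thus ?thesis using gL E1 False by simp
    qed
  qed
  show ?thesis using part1 part2 unfolding Gs_def by blast
qed

end
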